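(* In the setting described in the context, suppose $T$ is irreducible, $A$ is irreducible, $\rho<1$, $r_A>1$, and there is a finite $\theta$ with $1<\theta<r_A$ and $\theta=\delta(A^*(\theta))$. Then for complex $\omega$ with $|\omega|=1$, $\delta(\Gamma_A^*(\theta\omega))=1$ if and only if $\omega^\tau=1$. Thus $\tau=\max\{n\in\{1,\dots,M\}:\delta(\Gamma_A^*(\theta\omega_n))=1\}$. Further, if $\delta(\Gamma_A^*(\theta\omega))=1$, this eigenvalue is simple.
   Context: Let $M_0,M$ be positive integers. Consider a discrete-time Markov chain of M/G/1 type with state space $\{(0,j):1\le j\le M_0\}\cup\{(k,j):k\ge1,1\le j\le M\}$ and transition matrix in lexicographic order \[ T=\begin{pmatrix}B(0)&B(1)&B(2)&\cdots\\ C(0)&A(1)&A(2)&\cdots\\ O&A(0)&A(1)&\cdots\\ O&O&A(0)&\cdots\\ \vdots&\vdots&\vdots&\ddots\end{pmatrix}, \] with nonnegative blocks $A(k)$ ($M\times M$), $B(0)$, $B(k)$, $C(0)$ of compatible sizes, $A=\sum_{k\ge0}A(k)$ stochastic, $B(0)e+\sum_{k\ge1}B(k)e=e$; $\pi A=\pi$, $\pi e=1$, $\rho=\pi\sum_{k\ge1}kA(k)e$. $A^*(z)=\sum_{k\ge0}z^kA(k)$ has convergence radius $r_A$; $\Gamma_A^*(z)=z^{-1}A^*(z)$. For a square complex matrix $X$, $\delta(X)$ is a maximum-modulus eigenvalue with nonnegative argument and maximal real part among maximum-modulus eigenvalues. Period $\tau$: in the Markov additive process on $\mathbb Z\times\{1,\dots,M\}$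 moving from $(k_0,i)$ to $(k_0+k,j)$ with probability $[\Gamma_A(k)]_{i,j}$, where $\Gamma_A(k)=A(k+1)$ ($k\ge-1$), $O$ ($k\le-2$), $\tau$ is the common value of $\gcd\{k\ne0:(0,j)\to(k,j)\}$ ($\to$ = reachable with positive probability in $\ge1$ steps). $\omega_n=\exp(2\pi\iota/n)$. *)

theory Defs
  imports "HOL-Analysis.Analysis" "Jordan_Normal_Form.Spectral_Radius"
begin

text \<open>States are pairs (level, phase), 0-based phases: level 0 has phases 0..M0-1,
 levels k >= 1 have phases 0..M-1.\<close>

definition mg1_states :: "nat \<Rightarrow> nat \<Rightarrow> (nat \<times> nat) set" where
  "mg1_states M0 M = {(k, j). (k = 0 \<and> j < M0) \<or> (k \<ge> 1 \<and> j < M)}"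

definition mg1_T :: "(nat \<Rightarrow> real mat) \<Rightarrow> (nat \<Rightarrow> real mat) \<Rightarrow> real mat \<Rightarrow>
    (nat \<times> nat) \<Rightarrow> (nat \<times> nat) \<Rightarrow> real" where
  "mg1_T A B C0 s t = (case s of (k, i) \<Rightarrow> case t of (l, j) \<Rightarrow>
     if k = 0 then B l $$ (i, j)
     else if l = 0 then (if k = 1 then C0 $$ (i, j) else 0)
     else if k \<le> l + 1 then A (l + 1 - k) $$ (i, j) else 0)"

definition irreducible_on :: "'s set \<Rightarrow> ('s \<Rightarrow> 's \<Rightarrow> real) \<Rightarrow> bool" where
  "irreducible_on S P = (\<forall>s\<in>S. \<forall>t\<in>S. (s, t) \<in> {(u, v). u \<in> S \<and> v \<in> S \<and> P u v > 0}\<^sup>*)"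

definition Asum :: "(nat \<Rightarrow> real mat) \<Rightarrow> nat \<Rightarrow> nat \<Rightarrow> real" where
  "Asum A i j = (\<Sum>k. A k $$ (i, j))"

definition Astar :: "nat \<Rightarrow> (nat \<Rightarrow> real mat) \<Rightarrow> complex \<Rightarrow> complex mat" where
  "Astar M A z = mat M M (\<lambda>(i, j). \<Sum>k. z ^ k * complex_of_real (A k $$ (i, j)))"

definition GammaStar :: "nat \<Rightarrow> (nat \<Rightarrow> real mat) \<Rightarrow> complex \<Rightarrow> complex mat" where
  "GammaStar M A z = (inverse z) \<cdot>\<^sub>m Astar M A z"

definition rA :: "nat \<Rightarrow> (nat \<Rightarrow> real mat) \<Rightarrow> ereal" where
  "rA M A = (INF ij \<in> {..<M} \<times> {..<M}. conv_radius (\<lambda>k. A k $$ ij))"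

text \<open>delta(X): among eigenvalues of maximal modulus, the one with maximal real part,
 and among those (a conjugate-position pair) the one with nonnegative argument,
 i.e. larger imaginary part.\<close>
definition delta :: "complex mat \<Rightarrow> complex" where
  "delta X = (THE l. eigenvalue X l \<and>
      (\<forall>m. eigenvalue X m \<longrightarrow>
         cmod m \<le> cmod l \<and>
         (cmod m = cmod l \<longrightarrow> Re m < Re l \<or> (Re m = Re l \<and> Im m \<le> Im l))))"

text \<open>Markov additive process on Z x {phases}: from (k0,i) to (k0+k,j) with
 probability [Gamma_A(k)]_{ij} = A(k+1)_{ij} for k >= -1.\<close>
definition map_step :: "nat \<Rightarrow> (nat \<Rightarrow> real mat) \<Rightarrow> ((int \<times> nat) \<times> (int \<times> nat)) set" where
  "map_step M A = {((k0, i), (k1, j)). i < M \<and> j < M \<and> k1 - k0 \<ge> -1 \<and>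
                      A (nat (k1 - k0 + 1)) $$ (i, j) > 0}"

definition period_at :: "nat \<Rightarrow> (nat \<Rightarrow> real mat) \<Rightarrow> nat \<Rightarrow> nat" where
  "period_at M A j = nat (Gcd {k :: int. k \<noteq> 0 \<and> ((0, j), (k, j)) \<in> (map_step M A)\<^sup>+})"

text \<open>tau: the common value of period_at over phases; we take phase 0.\<close>
definition tau :: "nat \<Rightarrow> (nat \<Rightarrow> real mat) \<Rightarrow> nat" where
  "tau M A = period_at M A 0"

definition omega :: "nat \<Rightarrow> complex" where
  "omega n = cis (2 * pi / real n)"

end

theory Submission
  imports Defs "Jordan_Normal_Form.Jordan_Normal_Form_Uniqueness"
begin

hide_const (open) Coset.order


lemma delta_prop:
  fixes X :: "complex mat"
  assumes X: "X \<in> carrier_mat n n" and n: "n > 0"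
  shows "eigenvalue X (delta X) \<and> (\<forall>m. eigenvalue X m \<longrightarrow>
         cmod m \<le> cmod (delta X) \<and>
         (cmod m = cmod (delta X) \<longrightarrow> Re m < Re (delta X) \<or> (Re m = Re (delta X) \<and> Im m \<le> Im (delta X))))"
proof -
  define S where "S = Collect (eigenvalue X)"
  have fin: "finite S" and ne: "S \<noteq> {}"
    using card_finite_spectrum(1)[OF X] spectrum_non_empty[OF X n] unfolding S_def spectrum_def by auto
  define m1 where "m1 = Max (cmod ` S)"
  define S1 where "S1 = {s\<in>S. cmod s = m1}"
  have S1ne: "S1 \<noteq> {}" unfolding S1_def m1_def using fin ne
    by (smt (verit, ccfv_threshold) Collect_empty_eq Max_in finite_imageI image_iff image_is_empty)
  have fin1: "finite S1" using fin unfolding S1_def by auto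
  define m2 where "m2 = Max (Re ` S1)"
  define S2 where "S2 = {s\<in>S1. Re s = m2}"
  have S2ne: "S2 \<noteq> {}" unfolding S2_def m2_def using fin1 S1ne
    by (smt (verit, ccfv_threshold) Collect_empty_eq Max_in finite_imageI image_iff image_is_empty)
  have fin2: "finite S2" using fin1 unfolding S2_def by auto
  define m3 where "m3 = Max (Im ` S2)"
  obtain l where l: "l \<in> S2" "Im l = m3" unfolding m3_def using fin2 S2ne
    by (metis (no_types, lifting) Max_in finite_imageI image_iff image_is_empty)
  let ?P = "\<lambda>l. eigenvalue X l \<and>
      (\<forall>m. eigenvalue X m \<longrightarrow>
         cmod m \<le> cmod l \<and>
         (cmod m = cmod l \<longrightarrow> Re m < Re l \<or> (Re m = Re l \<and> Im m \<le> Im l)))"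
  have Pl: "?P l"
  proof -
    have lS: "l \<in> S" "cmod l = m1" "Re l = m2" using l unfolding S2_def S1_def by auto
    show ?thesis
    proof (intro conjI allI impI)
      show "eigenvalue X l" using lS S_def by auto
      fix m assume m: "eigenvalue X m"
      hence mS: "m \<in> S" unfolding S_def by auto
      show "cmod m \<le> cmod l" using lS mS fin unfolding m1_def by auto
      assume "cmod m = cmod l"
      hence mS1: "m \<in> S1" using lS mS unfolding S1_def by auto
      hence "Re m \<le> Re l" using lS fin1 unfolding m2_def by auto
      moreover have "Re m = Re l \<Longrightarrow> Im m \<le> Im l"
      proof -
        assume "Re m = Re l" hence "m \<in> S2" using mS1 lS unfolding S2_def by auto
        thus ?thesis using l fin2 unfolding m3_def by auto
      qed
      ultimately show "Re m < Re l \<or> (Re m = Re l \<and> Im m \<le> Im l)" by linarith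
    qed
  qed
  have uniq: "\<And>l'. ?P l' \<Longrightarrow> l' = l"
  proof -
    fix l' assume Pl': "?P l'"
    have c: "cmod l' = cmod l" using Pl Pl' by (meson order_antisym)
    have r: "Re l' = Re l" using Pl Pl' c by fastforce
    have "Im l' = Im l" using Pl Pl' c r by fastforce
    thus "l' = l" using r complex_eqI by blast
  qed
  have "delta X = l" unfolding delta_def by (rule the_equality[of ?P l, OF Pl uniq])
  thus ?thesis using Pl by simp
qed

lemma delta_eq_1:
  fixes X :: "complex mat"
  assumes "eigenvalue X 1" and "\<And>m. eigenvalue X m \<Longrightarrow> cmod m \<le> 1"
  shows "delta X = 1"
  unfolding delta_def
proof (rule the_equality)
  show "eigenvalue X 1 \<and> (\<forall>m. eigenvalue X m \<longrightarrow> cmod m \<le> cmod 1 \<and>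
        (cmod m = cmod 1 \<longrightarrow> Re m < Re 1 \<or> Re m = Re 1 \<and> Im m \<le> Im 1))"
  proof (intro conjI allI impI)
    fix m assume m: "eigenvalue X m"
    show "cmod m \<le> cmod 1" using assms(2)[OF m] by simp
    assume c: "cmod m = cmod 1"
    have "Re m \<le> 1" using c complex_Re_le_cmod[of m] by simp
    moreover have "Re m = 1 \<Longrightarrow> Im m = 0" using c by (auto simp: cmod_def)
    ultimately show "Re m < Re 1 \<or> Re m = Re 1 \<and> Im m \<le> Im 1" by force
  qed (use assms in auto)
next
  fix l assume Pl: "eigenvalue X l \<and> (\<forall>m. eigenvalue X m \<longrightarrow> cmod m \<le> cmod l \<and>
        (cmod m = cmod l \<longrightarrow> Re m < Re l \<or> Re m = Re l \<and> Im m \<le> Im l))"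
  have "cmod l \<le> 1" using assms(2) Pl by auto
  moreover have "1 \<le> cmod l" using Pl assms(1) by fastforce
  ultimately have c: "cmod l = 1" by simp
  hence "Re 1 < Re l \<or> Re 1 = Re l \<and> Im 1 \<le> Im l" using Pl assms(1) by fastforce
  hence "Re l \<ge> 1" by auto
  moreover have "Re l \<le> 1" using c complex_Re_le_cmod[of l] by simp
  ultimately have "Re l = 1" by simp
  moreover have "Im l = 0" using c \<open>Re l = 1\<close> by (auto simp: cmod_def)
  ultimately show "l = 1" by (simp add: complex_eq_iff)
qed

lemma poly_exp_lim:
  assumes l: "1 < (l::real)"
  shows "(\<lambda>k. real k ^ d / l ^ k) \<longlonglongrightarrow> 0"
proof (cases "d = 0")
  case True
  have "(\<lambda>k. (inverse l) ^ k) \<longlonglongrightarrow> 0" using l by (intro LIMSEQ_realpow_zero) (auto simp: inverse_less_1_iff)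
  thus ?thesis using True by (simp add: power_inverse divide_inverse)
next
  case False
  define m where "m = root d l"
  have m1: "m > 1" unfolding m_def using False l by simp
  have md: "m ^ d = l" unfolding m_def using False l by simp
  have "(\<lambda>k. real k * (inverse m) ^ k) \<longlonglongrightarrow> 0"
    using m1 by (intro powser_times_n_limit_0) (auto simp: inverse_less_1_iff)
  hence "(\<lambda>k. (real k * (inverse m) ^ k) ^ d) \<longlonglongrightarrow> 0 ^ d"
    by (intro tendsto_power)
  moreover have "\<And>k. (real k * (inverse m) ^ k) ^ d = real k ^ d / l ^ k"
    unfolding md[symmetric] by (simp add: power_mult_distrib power_inverse divide_inverse
        power_mult[symmetric] mult.commute)
  ultimately show ?thesis using False by (simp add: power_0_left)
qed







locale nnmat =
  fixes n :: nat and p :: "nat \<Rightarrow> nat \<Rightarrow> real"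
  assumes n_pos: "n > 0"
    and p_nonneg: "\<And>i j. i < n \<Longrightarrow> j < n \<Longrightarrow> p i j \<ge> 0"
    and irred: "irreducible_on {..<n} p"
    and ev_le1: "\<And>l. eigenvalue (mat n n (\<lambda>(i,j). complex_of_real (p i j))) l \<Longrightarrow> cmod l \<le> 1"
    and ev1: "eigenvalue (mat n n (\<lambda>(i,j). complex_of_real (p i j))) 1"
begin

abbreviation Pm :: "complex mat" where "Pm \<equiv> mat n n (\<lambda>(i,j). complex_of_real (p i j))"

definition Pf :: "(nat \<Rightarrow> real) \<Rightarrow> nat \<Rightarrow> real" where
  "Pf x i = (\<Sum>j<n. p i j * x j)"

lemma Pm_carrier: "Pm \<in> carrier_mat n n" by simp

lemma Pm_mult_vec: "Pm *\<^sub>v vec n (\<lambda>j. complex_of_real (x j)) = vec n (\<lambda>i. complex_of_real (Pf x i))"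
  by (rule eq_vecI) (auto simp: Pf_def scalar_prod_def lessThan_atLeast0)

lemma Pm_pow_vec: "Pm ^\<^sub>m k *\<^sub>v vec n (\<lambda>j. complex_of_real (x j)) = vec n (\<lambda>i. complex_of_real ((Pf ^^ k) x i))"
proof (induction k arbitrary: x)
  case 0
  show ?case by (rule eq_vecI) auto
next
  case (Suc k)
  have "Pm ^\<^sub>m Suc k *\<^sub>v vec n (\<lambda>j. complex_of_real (x j))
      = Pm ^\<^sub>m k *\<^sub>v (Pm *\<^sub>v vec n (\<lambda>j. complex_of_real (x j)))"
    by (simp add: assoc_mult_mat_vec[of _ n n _ n])
  also have "\<dots> = vec n (\<lambda>i. complex_of_real ((Pf ^^ k) (Pf x) i))"
    unfolding Pm_mult_vec Suc ..
  finally show ?case by (simp add: funpow_Suc_right del: funpow.simps)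
qed

lemma Pf_mono: "(\<And>j. j < n \<Longrightarrow> x j \<le> z j) \<Longrightarrow> i < n \<Longrightarrow> Pf x i \<le> Pf z i"
  unfolding Pf_def by (intro sum_mono mult_left_mono) (auto simp: p_nonneg)

lemma Pf_nonneg: "(\<And>j. j < n \<Longrightarrow> 0 \<le> x j) \<Longrightarrow> i < n \<Longrightarrow> 0 \<le> Pf x i"
  unfolding Pf_def by (intro sum_nonneg mult_nonneg_nonneg) (auto simp: p_nonneg)

lemma Pf_smult: "Pf (\<lambda>j. c * x j) i = c * Pf x i"
  unfolding Pf_def by (simp add: sum_distrib_left algebra_simps)

lemma Pf_add: "Pf (\<lambda>j. x j + z j) i = Pf x i + Pf z i"
  unfolding Pf_def by (simp add: sum.distrib algebra_simps)

lemma Pf_diff: "Pf (\<lambda>j. x j - z j) i = Pf x i - Pf z i"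
  unfolding Pf_def by (simp add: sum_subtractf algebra_simps)

lemma Pf_abs: "i < n \<Longrightarrow> \<bar>Pf x i\<bar> \<le> Pf (\<lambda>j. \<bar>x j\<bar>) i"
  unfolding Pf_def by (rule order_trans[OF sum_abs]) (auto simp: abs_mult p_nonneg intro!: sum_mono)

lemma Pf_cong: "(\<And>j. j < n \<Longrightarrow> x j = z j) \<Longrightarrow> Pf x i = Pf z i"
  unfolding Pf_def by auto

lemma Pfk_nonneg: "(\<And>j. j < n \<Longrightarrow> 0 \<le> x j) \<Longrightarrow> i < n \<Longrightarrow> 0 \<le> (Pf ^^ k) x i"
proof (induction k arbitrary: i)
  case (Suc k) thus ?case by (auto intro!: Pf_nonneg)
qed auto

lemma sr_le1: "spectral_radius Pm \<le> 1"
proof -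
  have "spectral_radius Pm \<in> norm ` spectrum Pm"
    by (rule spectral_radius_mem_max(1)[OF Pm_carrier n_pos])
  thus ?thesis using ev_le1 unfolding spectrum_def by auto
qed

lemma no_growth:
  assumes y: "\<And>j. j < n \<Longrightarrow> 0 \<le> y j" and i0: "i0 < n" "y i0 > 0"
    and lam: "lam > 1" and gr: "\<And>i. i < n \<Longrightarrow> Pf y i \<ge> lam * y i"
  shows False
proof -
  have grk: "(Pf ^^ k) y i \<ge> lam ^ k * y i" if "i < n" for k i
    using that
  proof (induction k arbitrary: i)
    case (Suc k)
    have "(Pf ^^ Suc k) y i = Pf ((Pf ^^ k) y) i" by simp
    also have "\<dots> \<ge> Pf (\<lambda>j. lam ^ k * y j) i" by (rule Pf_mono[OF Suc.IH Suc.prems])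
    also have "Pf (\<lambda>j. lam ^ k * y j) i = lam ^ k * Pf y i" by (rule Pf_smult)
    also have "\<dots> \<ge> lam ^ k * (lam * y i)"
      using gr[OF Suc.prems] lam by (intro mult_left_mono) auto
    finally show ?case by (simp add: algebra_simps)
  qed simp
  obtain c1 c2 where nb: "\<And>k. norm_bound (Pm ^\<^sub>m k) (c1 + c2 * of_nat k ^ (n - 1))"
    using spectral_radius_jnf_norm_bound_le_1_upper_triangular[OF Pm_carrier sr_le1] by blast
  define Y where "Y = (\<Sum>j<n. y j)"
  have ub: "(Pf ^^ k) y i0 \<le> (c1 + c2 * real k ^ (n - 1)) * Y" for k
  proof -
    let ?v = "vec n (\<lambda>j. complex_of_real (y j))"
    have "complex_of_real ((Pf ^^ k) y i0) = (Pm ^\<^sub>m k *\<^sub>v ?v) $ i0"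
      using Pm_pow_vec[of k y] i0 by simp
    also have "\<dots> = (\<Sum>j<n. (Pm ^\<^sub>m k) $$ (i0, j) * complex_of_real (y j))"
      using i0 by (simp add: scalar_prod_def lessThan_atLeast0)
    finally have eq: "complex_of_real ((Pf ^^ k) y i0) = (\<Sum>j<n. (Pm ^\<^sub>m k) $$ (i0, j) * complex_of_real (y j))" .
    have "(Pf ^^ k) y i0 \<le> cmod (complex_of_real ((Pf ^^ k) y i0))" by simp
    also have "\<dots> \<le> (\<Sum>j<n. cmod ((Pm ^\<^sub>m k) $$ (i0, j)) * y j)"
      unfolding eq by (rule order_trans[OF norm_sum]) (auto simp: norm_mult y)
    also have "\<dots> \<le> (\<Sum>j<n. (c1 + c2 * real k ^ (n - 1)) * y j)"
      using nb[of k] i0 y unfolding norm_bound_def by (intro sum_mono mult_right_mono) auto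
    finally show ?thesis unfolding Y_def by (simp add: sum_distrib_left)
  qed
  have l0: "(\<lambda>k. 1 / lam ^ k) \<longlonglongrightarrow> 0"
    using LIMSEQ_realpow_zero[of "1/lam"] lam by (simp add: power_one_over)
  have lim: "(\<lambda>k. (c1 * (1 / lam ^ k) + c2 * (real k ^ (n - 1) / lam ^ k)) * Y / y i0) \<longlonglongrightarrow>
      (c1 * 0 + c2 * 0) * Y / y i0"
    by (intro tendsto_mult tendsto_divide tendsto_add tendsto_const poly_exp_lim lam l0) (use i0 in auto)
  hence "eventually (\<lambda>k. (c1 * (1 / lam ^ k) + c2 * (real k ^ (n - 1) / lam ^ k)) * Y / y i0 < 1) sequentially"
    by (intro order_tendstoD) auto
  then obtain k where k: "(c1 * (1 / lam ^ k) + c2 * (real k ^ (n - 1) / lam ^ k)) * Y / y i0 < 1"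
    by (auto simp: eventually_sequentially)
  have lk: "lam ^ k > 0" using lam by simp
  have "lam ^ k * y i0 \<le> (c1 + c2 * real k ^ (n - 1)) * Y"
    using grk[OF i0(1), of k] ub[of k] by linarith
  hence "(c1 + c2 * real k ^ (n - 1)) * Y / (lam ^ k * y i0) \<ge> 1"
    using lk i0 by (simp add: field_simps)
  moreover have "(c1 + c2 * real k ^ (n - 1)) * Y / (lam ^ k * y i0) =
      (c1 * (1 / lam ^ k) + c2 * (real k ^ (n - 1) / lam ^ k)) * Y / y i0"
  proof -
    have "c1 * (1 / lam ^ k) + c2 * (real k ^ (n - 1) / lam ^ k) = (c1 + c2 * real k ^ (n - 1)) / lam ^ k"
      by (simp add: add_divide_distrib)
    thus ?thesis by simp
  qed
  ultimately show False using k by linarith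
qed


definition E :: "(nat \<times> nat) set" where
  "E = {(u, v). u \<in> {..<n} \<and> v \<in> {..<n} \<and> p u v > 0}"

lemma reach: "i < n \<Longrightarrow> j < n \<Longrightarrow> (i, j) \<in> E\<^sup>*"
  using irred unfolding irreducible_on_def E_def by auto

lemma reach_pos:
  assumes "(i, j) \<in> E\<^sup>*"
  shows "\<exists>m. \<forall>x::nat\<Rightarrow>real. (\<forall>l<n. 0 \<le> x l) \<longrightarrow> x j > 0 \<longrightarrow> (Pf ^^ m) x i > 0"
  using assms
proof (induction rule: converse_rtrancl_induct)
  case base
  show ?case by (rule exI[of _ 0]) auto
next
  case (step i k)
  then obtain m where m: "\<And>x. (\<forall>l<n. 0 \<le> x l) \<Longrightarrow> x j > 0 \<Longrightarrow> (Pf ^^ m) x k > 0" by blast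
  have ik: "i < n" "k < n" "p i k > 0" using step(1) unfolding E_def by auto
  show ?case
  proof (rule exI[of _ "Suc m"], intro allI impI)
    fix x :: "nat \<Rightarrow> real" assume x: "\<forall>l<n. 0 \<le> x l" "x j > 0"
    have nn: "\<And>l. l < n \<Longrightarrow> 0 \<le> p i l * (Pf ^^ m) x l"
      using x ik by (intro mult_nonneg_nonneg p_nonneg Pfk_nonneg) auto
    have "0 < p i k * (Pf ^^ m) x k" using m[OF x] ik by simp
    also have "\<dots> \<le> (\<Sum>l<n. p i l * (Pf ^^ m) x l)"
      by (rule member_le_sum[of k "{..<n}" "\<lambda>l. p i l * (Pf ^^ m) x l"]) (use ik nn in auto)
    also have "\<dots> = (Pf ^^ Suc m) x i" by (simp add: Pf_def)
    finally show "(Pf ^^ Suc m) x i > 0" .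
  qed
qed

lemma zero_prop:
  assumes u: "\<And>j. j < n \<Longrightarrow> 0 \<le> u j" and sub: "\<And>j. j < n \<Longrightarrow> Pf u j \<le> u j"
    and i: "i < n" "u i = 0" and j: "j < n"
  shows "u j = 0"
proof -
  have "(i, j) \<in> E\<^sup>*" using reach i j by auto
  thus ?thesis
  proof (induction rule: rtrancl_induct)
    case base show ?case using i by simp
  next
    case (step a b)
    have ab: "a < n" "b < n" "p a b > 0" using step(2) unfolding E_def by auto
    have nn: "\<And>l. l < n \<Longrightarrow> 0 \<le> p a l * u l" using u ab by (simp add: p_nonneg)
    have "p a b * u b \<le> (\<Sum>l<n. p a l * u l)"
      by (rule member_le_sum[of b "{..<n}" "\<lambda>l. p a l * u l"]) (use ab nn in auto)
    also have "\<dots> = Pf u a" by (simp add: Pf_def)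
    also have "\<dots> \<le> 0" using sub[OF ab(1)] step(3) by simp
    finally have "p a b * u b \<le> 0" .
    moreover have "u b \<ge> 0" using u ab by simp
    ultimately show ?case using ab(3) by (simp add: mult_le_0_iff)
  qed
qed

lemma pos_of_fix:
  assumes u: "\<And>j. j < n \<Longrightarrow> 0 \<le> u j" and sub: "\<And>j. j < n \<Longrightarrow> Pf u j \<le> u j"
    and j0: "j0 < n" "u j0 \<noteq> 0" and i: "i < n"
  shows "u i > 0"
  using zero_prop[OF u sub i _ j0(1)] j0 u[OF i] by force

lemma Pf_sum: "Pf (\<lambda>j. \<Sum>m\<in>A. f m j) i = (\<Sum>m\<in>A. Pf (f m) i)"
  unfolding Pf_def by (simp add: sum_distrib_left sum.swap[of _ A])

lemma Pfk_diff: "(Pf ^^ m) (\<lambda>j. a j - b j) = (\<lambda>i. (Pf ^^ m) a i - (Pf ^^ m) b i)"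
proof (induction m)
  case (Suc m) show ?case by (rule ext) (simp add: Suc Pf_diff)
qed simp

lemma eq_of_ge:
  assumes y: "\<And>j. j < n \<Longrightarrow> 0 \<le> y j" and i0: "i0 < n" "y i0 > 0"
    and ge: "\<And>i. i < n \<Longrightarrow> Pf y i \<ge> y i" and i: "i < n"
  shows "Pf y i = y i"
proof (rule ccontr)
  assume "Pf y i \<noteq> y i"
  hence i1: "Pf y i > y i" using ge[OF i] by simp
  define x where "x = (\<lambda>j. Pf y j - y j)"
  have x: "\<And>l. l < n \<Longrightarrow> 0 \<le> x l" using ge unfolding x_def by auto
  have xi: "x i > 0" using i1 unfolding x_def by simp
  have "\<forall>l\<in>{..<n}. \<exists>m. \<forall>x::nat\<Rightarrow>real. (\<forall>l<n. 0 \<le> x l) \<longrightarrow> x i > 0 \<longrightarrow> (Pf ^^ m) x l > 0"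
    using reach_pos reach i by auto
  then obtain mm where mm: "\<And>l x. l < n \<Longrightarrow> (\<forall>l<n. 0 \<le> x l) \<Longrightarrow> x i > 0 \<Longrightarrow> (Pf ^^ mm l) x l > 0"
    by (metis lessThan_iff)
  define N where "N = Suc (Max (mm ` {..<n}))"
  have mmN: "\<And>l. l < n \<Longrightarrow> mm l < N" unfolding N_def
    by (simp add: le_imp_less_Suc)
  define z where "z = (\<lambda>j. \<Sum>m<N. (Pf ^^ m) y j)"
  have zy: "\<And>j. j < n \<Longrightarrow> y j \<le> z j"
  proof -
    fix j assume j: "j < n"
    have "y j = (Pf ^^ 0) y j" by simp
    also have "\<dots> \<le> z j" unfolding z_def
      by (rule member_le_sum) (use j y in \<open>auto intro: Pfk_nonneg simp: N_def\<close>)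
    finally show "y j \<le> z j" .
  qed
  have diff: "Pf z j - z j = (\<Sum>m<N. (Pf ^^ m) x j)" for j
  proof -
    have "Pf z j = (\<Sum>m<N. (Pf ^^ Suc m) y j)" unfolding z_def Pf_sum by simp
    moreover have "(\<Sum>m<N. (Pf ^^ m) x j) = (\<Sum>m<N. (Pf ^^ Suc m) y j - (Pf ^^ m) y j)"
      unfolding x_def Pfk_diff by (simp add: funpow_Suc_right del: funpow.simps)
    ultimately show ?thesis unfolding z_def by (simp add: sum_subtractf)
  qed
  have dpos: "Pf z j - z j > 0" if j: "j < n" for j
  proof -
    have "0 < (Pf ^^ mm j) x j" using mm[of j x] j xi x by auto
    also have "\<dots> \<le> (\<Sum>m<N. (Pf ^^ m) x j)"
      by (rule member_le_sum) (use j x mmN in \<open>auto intro: Pfk_nonneg\<close>)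
    finally show ?thesis unfolding diff .
  qed
  define eps where "eps = Min ((\<lambda>j. Pf z j - z j) ` {..<n})"
  define Z where "Z = Max (z ` {..<n})"
  have eps: "eps > 0" unfolding eps_def using dpos n_pos by (subst Min_gr_iff) auto
  have Z: "Z > 0" unfolding Z_def using zy i0 n_pos
    by (metis (no_types, lifting) Max_ge finite_imageI finite_lessThan image_eqI lessThan_iff
        order_less_le_trans)
  have zle: "\<And>j. j < n \<Longrightarrow> z j \<le> Z" unfolding Z_def by auto
  show False
  proof (rule no_growth[of z i0 "1 + eps / Z"])
    show "\<And>j. j < n \<Longrightarrow> 0 \<le> z j" using zy y by (meson order_trans)
    show "i0 < n" "z i0 > 0" using i0 zy[OF i0(1)] by auto
    show "1 + eps / Z > 1" using eps Z by simp
    fix j assume j: "j < n"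
    have "eps \<le> Pf z j - z j" unfolding eps_def using j by auto
    moreover have "eps / Z * z j \<le> eps"
      using zle[OF j] Z eps zy[OF j] y[OF j] by (simp add: field_simps mult_left_mono)
    ultimately show "(1 + eps / Z) * z j \<le> Pf z j" by (simp add: algebra_simps)
  qed
qed



lemma Pm_vec_index: "w \<in> carrier_vec n \<Longrightarrow> i < n \<Longrightarrow> (Pm *\<^sub>v w) $ i = (\<Sum>j<n. complex_of_real (p i j) * w $ j)"
  by (simp add: scalar_prod_def lessThan_atLeast0)

lemma perron_ex: "\<exists>y. (\<forall>i<n. y i > 0) \<and> (\<forall>i<n. Pf y i = y i)"
proof -
  obtain v where ev: "eigenvector Pm v 1" using ev1 unfolding eigenvalue_def by auto
  hence v: "v \<in> carrier_vec n" "v \<noteq> 0\<^sub>v n" "Pm *\<^sub>v v = 1 \<cdot>\<^sub>v v" unfolding eigenvector_def by auto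
  obtain j0 where j0: "j0 < n" "v $ j0 \<noteq> 0" using v(1,2) by (metis eq_vecI carrier_vecD index_zero_vec)
  define y where "y = (\<lambda>j. cmod (v $ j))"
  have y0: "\<And>j. j < n \<Longrightarrow> 0 \<le> y j" unfolding y_def by simp
  have ge: "Pf y i \<ge> y i" if i: "i < n" for i
  proof -
    have "v $ i = (Pm *\<^sub>v v) $ i" using v(1,3) i by simp
    also have "\<dots> = (\<Sum>j<n. complex_of_real (p i j) * v $ j)" using Pm_vec_index[OF v(1) i] .
    finally have "y i = cmod (\<Sum>j<n. complex_of_real (p i j) * v $ j)" unfolding y_def by simp
    also have "\<dots> \<le> (\<Sum>j<n. cmod (complex_of_real (p i j) * v $ j))" by (rule norm_sum)
    also have "\<dots> = Pf y i" unfolding Pf_def y_def using i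
      by (intro sum.cong) (auto simp: norm_mult p_nonneg)
    finally show ?thesis .
  qed
  have yj0: "y j0 > 0" unfolding y_def using j0 by simp
  have yfix: "\<And>i. i < n \<Longrightarrow> Pf y i = y i" using eq_of_ge[OF y0 j0(1) yj0 ge] by auto
  have "\<And>i. i < n \<Longrightarrow> y i > 0" using pos_of_fix[OF y0 _ j0(1)] yfix yj0 by force
  thus ?thesis using yfix by blast
qed

definition perron :: "nat \<Rightarrow> real" where
  "perron = (SOME y. (\<forall>i<n. y i > 0) \<and> (\<forall>i<n. Pf y i = y i))"

lemma perron: "\<And>i. i < n \<Longrightarrow> perron i > 0" "\<And>i. i < n \<Longrightarrow> Pf perron i = perron i"
  using someI_ex[OF perron_ex] unfolding perron_def[symmetric] by auto

lemma fix_unique: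
  assumes r: "\<And>i. i < n \<Longrightarrow> Pf r i = r i"
  shows "\<exists>c. \<forall>i<n. r i = c * perron i"
proof -
  define c where "c = Min ((\<lambda>i. r i / perron i) ` {..<n})"
  obtain i0 where i0: "i0 < n" "c = r i0 / perron i0"
    unfolding c_def using n_pos
    by (metis (no_types, lifting) Min_in empty_iff finite_imageI finite_lessThan image_iff
        image_is_empty lessThan_iff)
  have cle: "\<And>j. j < n \<Longrightarrow> c \<le> r j / perron j" unfolding c_def by auto
  define u where "u = (\<lambda>j. r j - c * perron j)"
  have u0: "\<And>j. j < n \<Longrightarrow> 0 \<le> u j"
    unfolding u_def using cle perron(1) by (simp add: field_simps)
  have uf: "\<And>j. j < n \<Longrightarrow> Pf u j \<le> u j"
    unfolding u_def Pf_diff Pf_smult using r perron(2) by simp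
  have ui0: "u i0 = 0" unfolding u_def using i0 perron(1)[OF i0(1)] by simp
  have "\<And>j. j < n \<Longrightarrow> u j = 0" using zero_prop[OF u0 uf i0(1) ui0] .
  thus ?thesis unfolding u_def by (intro exI[of _ c]) auto
qed

lemma Pfk_mono: "(\<And>j. j < n \<Longrightarrow> a j \<le> b j) \<Longrightarrow> i < n \<Longrightarrow> (Pf ^^ k) a i \<le> (Pf ^^ k) b i"
proof (induction k arbitrary: i)
  case (Suc k) thus ?case by (auto intro!: Pf_mono)
qed auto

lemma Pfk_abs: "i < n \<Longrightarrow> \<bar>(Pf ^^ k) a i\<bar> \<le> (Pf ^^ k) (\<lambda>j. \<bar>a j\<bar>) i"
proof (induction k arbitrary: i)
  case (Suc k)
  have "\<bar>(Pf ^^ Suc k) a i\<bar> = \<bar>Pf ((Pf ^^ k) a) i\<bar>" by simp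
  also have "\<dots> \<le> Pf (\<lambda>j. \<bar>(Pf ^^ k) a j\<bar>) i" by (rule Pf_abs[OF Suc.prems])
  also have "\<dots> \<le> Pf ((Pf ^^ k) (\<lambda>j. \<bar>a j\<bar>)) i" by (rule Pf_mono[OF Suc.IH Suc.prems])
  finally show ?case by simp
qed simp

lemma Pfk_perron: "i < n \<Longrightarrow> (Pf ^^ k) (\<lambda>j. K * perron j) i = K * perron i"
proof (induction k arbitrary: i)
  case (Suc k)
  have "(Pf ^^ Suc k) (\<lambda>j. K * perron j) i = Pf ((Pf ^^ k) (\<lambda>j. K * perron j)) i" by simp
  also have "\<dots> = Pf (\<lambda>j. K * perron j) i" by (rule Pf_cong) (use Suc.IH in auto)
  also have "\<dots> = K * perron i" unfolding Pf_smult using perron(2)[OF Suc.prems] by simp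
  finally show ?case .
qed simp

lemma gen_fix:
  assumes x: "\<And>i. i < n \<Longrightarrow> Pf (\<lambda>j. Pf v j - v j) i = Pf v i - v i"
    and i: "i < n"
  shows "Pf v i = v i"
proof -
  obtain c where c: "\<And>i. i < n \<Longrightarrow> Pf v i - v i = c * perron i"
    using fix_unique[of "\<lambda>j. Pf v j - v j"] x by auto
  have iter: "(Pf ^^ k) v i = v i + real k * c * perron i" if "i < n" for k i
    using that
  proof (induction k arbitrary: i)
    case (Suc k)
    have "(Pf ^^ Suc k) v i = Pf ((Pf ^^ k) v) i" by simp
    also have "\<dots> = Pf (\<lambda>j. v j + (real k * c) * perron j) i"
      by (rule Pf_cong) (use Suc.IH in auto)
    also have "\<dots> = Pf v i + (real k * c) * perron i"
      unfolding Pf_add Pf_smult using perron(2)[OF Suc.prems] by simp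
    also have "\<dots> = v i + real (Suc k) * c * perron i" using c[OF Suc.prems] by (simp add: algebra_simps)
    finally show ?case .
  qed simp
  define K where "K = Max ((\<lambda>j. \<bar>v j\<bar> / perron j) ` {..<n})"
  have Kb: "\<And>j. j < n \<Longrightarrow> \<bar>v j\<bar> \<le> K * perron j"
  proof -
    fix j assume j: "j < n"
    have "\<bar>v j\<bar> / perron j \<le> K" unfolding K_def using j by auto
    thus "\<bar>v j\<bar> \<le> K * perron j" using perron(1)[OF j] by (simp add: field_simps)
  qed
  have bnd: "\<bar>v 0 + real k * c * perron 0\<bar> \<le> K * perron 0" for k
  proof -
    have "\<bar>(Pf ^^ k) v 0\<bar> \<le> (Pf ^^ k) (\<lambda>j. \<bar>v j\<bar>) 0" by (rule Pfk_abs[OF n_pos])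
    also have "\<dots> \<le> (Pf ^^ k) (\<lambda>j. K * perron j) 0" by (rule Pfk_mono[OF Kb n_pos])
    also have "\<dots> = K * perron 0" by (rule Pfk_perron[OF n_pos])
    finally show ?thesis using iter[OF n_pos] by simp
  qed
  have "c = 0"
  proof (rule ccontr)
    assume c0: "c \<noteq> 0"
    have p0: "perron 0 > 0" using perron(1)[OF n_pos] .
    obtain k :: nat where k: "real k > (K * perron 0 + \<bar>v 0\<bar>) / (\<bar>c\<bar> * perron 0)"
      using reals_Archimedean2 by blast
    have "real k * (\<bar>c\<bar> * perron 0) > K * perron 0 + \<bar>v 0\<bar>"
      using k c0 p0 by (simp add: field_simps)
    moreover have "real k * (\<bar>c\<bar> * perron 0) = \<bar>real k * c * perron 0\<bar>" using p0 by (simp add: abs_mult)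
    moreover have "\<bar>real k * c * perron 0\<bar> \<le> \<bar>v 0 + real k * c * perron 0\<bar> + \<bar>v 0\<bar>" by linarith
    ultimately show False using bnd[of k] by linarith
  qed
  thus ?thesis using c[OF i] by simp
qed



abbreviation CM :: "complex mat" where "CM \<equiv> char_matrix Pm 1"

lemma CM_carrier: "CM \<in> carrier_mat n n" by simp

lemma CM_dim[simp]: "dim_row CM = n" "dim_col CM = n" using carrier_matD[OF CM_carrier] by auto

lemma CM_vec: "w \<in> carrier_vec n \<Longrightarrow> i < n \<Longrightarrow> (CM *\<^sub>v w) $ i = (\<Sum>j<n. complex_of_real (p i j) * w $ j) - w $ i"
proof -
  assume w: "w \<in> carrier_vec n" and i: "i < n"
  have "(CM *\<^sub>v w) $ i = (\<Sum>j<n. CM $$ (i, j) * w $ j)"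
  proof -
    have dr: "dim_row CM = n" "dim_col CM = n" using carrier_matD[OF CM_carrier] by auto
    show ?thesis using w i by (simp add: scalar_prod_def lessThan_atLeast0 dr)
  qed
  also have "\<dots> = (\<Sum>j<n. (complex_of_real (p i j) - (if i = j then 1 else 0)) * w $ j)"
  proof (rule sum.cong)
    fix j assume "j \<in> {..<n}"
    hence "CM $$ (i, j) = complex_of_real (p i j) - (if i = j then 1 else 0)"
      using i unfolding char_matrix_def by simp
    thus "CM $$ (i, j) * w $ j = (complex_of_real (p i j) - (if i = j then 1 else 0)) * w $ j" by simp
  qed simp
  also have "\<dots> = (\<Sum>j<n. complex_of_real (p i j) * w $ j) - (\<Sum>j<n. (if i = j then 1 else 0) * w $ j)"
    by (simp add: algebra_simps sum_subtractf)
  also have "(\<Sum>j<n. (if i = j then 1 else 0) * w $ j) = (\<Sum>j<n. if i = j then w $ j else 0)"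
    by (rule sum.cong) auto
  also have "\<dots> = w $ i" using i by simp
  finally show ?thesis .
qed

lemma Re_sum_p: "Re (\<Sum>j<n. complex_of_real (p i j) * w $ j) = Pf (\<lambda>j. Re (w $ j)) i"
  unfolding Pf_def by (simp add: Re_sum)

lemma Im_sum_p: "Im (\<Sum>j<n. complex_of_real (p i j) * w $ j) = Pf (\<lambda>j. Im (w $ j)) i"
  unfolding Pf_def by (simp add: Im_sum)

lemma real_part_gen:
  assumes a: "\<And>i. i < n \<Longrightarrow> Pf (\<lambda>j. Pf f j - f j) i - (Pf f i - f i) = 0"
  shows "\<exists>c. \<forall>i<n. f i = c * perron i"
proof -
  have "Pf f i = f i" if i: "i < n" for i
    by (rule gen_fix[OF _ i]) (use a in simp)
  thus ?thesis using fix_unique by blast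
qed


lemma kernel_sub:
  assumes v: "v \<in> mat_kernel (CM ^\<^sub>m 2)"
  shows "\<exists>c. v = c \<cdot>\<^sub>v vec n (\<lambda>j. complex_of_real (perron j))"
proof -
  have C2: "CM ^\<^sub>m 2 \<in> carrier_mat n n" by simp
  have vc: "v \<in> carrier_vec n" and v0: "CM ^\<^sub>m 2 *\<^sub>v v = 0\<^sub>v n" using mat_kernelD[OF C2 v] by auto
  have eq2: "CM ^\<^sub>m 2 *\<^sub>v v = CM *\<^sub>v (CM *\<^sub>v v)"
    using vc by (simp add: numeral_2_eq_2 assoc_mult_mat_vec[of _ n n _ n])
  define x where "x = CM *\<^sub>v v"
  have xc: "x \<in> carrier_vec n" unfolding x_def using vc CM_carrier by (metis mult_mat_vec_carrier)
  have x0: "\<And>i. i < n \<Longrightarrow> (CM *\<^sub>v x) $ i = 0" using v0 eq2 unfolding x_def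
    by (metis index_zero_vec(1))
  have xi: "\<And>i. i < n \<Longrightarrow> x $ i = (\<Sum>j<n. complex_of_real (p i j) * v $ j) - v $ i"
    unfolding x_def using CM_vec[OF vc] by simp
  have re: "\<exists>c. \<forall>i<n. Re (v $ i) = c * perron i"
  proof (rule real_part_gen)
    fix i assume i: "i < n"
    have "Re ((CM *\<^sub>v x) $ i) = 0" using x0[OF i] by simp
    moreover have "Re ((CM *\<^sub>v x) $ i) = Pf (\<lambda>j. Re (x $ j)) i - Re (x $ i)"
      unfolding CM_vec[OF xc i] using Re_sum_p by simp
    moreover have "Pf (\<lambda>j. Re (x $ j)) i = Pf (\<lambda>j. Pf (\<lambda>j. Re (v $ j)) j - Re (v $ j)) i"
      by (rule Pf_cong) (simp add: xi Re_sum_p Pf_def)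
    moreover have "Re (x $ i) = Pf (\<lambda>j. Re (v $ j)) i - Re (v $ i)" by (simp add: xi[OF i] Re_sum_p Pf_def)
    ultimately show "Pf (\<lambda>j. Pf (\<lambda>j. Re (v $ j)) j - Re (v $ j)) i - (Pf (\<lambda>j. Re (v $ j)) i - Re (v $ i)) = 0"
      by simp
  qed
  have im: "\<exists>c. \<forall>i<n. Im (v $ i) = c * perron i"
  proof (rule real_part_gen)
    fix i assume i: "i < n"
    have "Im ((CM *\<^sub>v x) $ i) = 0" using x0[OF i] by simp
    moreover have "Im ((CM *\<^sub>v x) $ i) = Pf (\<lambda>j. Im (x $ j)) i - Im (x $ i)"
      unfolding CM_vec[OF xc i] using Im_sum_p by simp
    moreover have "Pf (\<lambda>j. Im (x $ j)) i = Pf (\<lambda>j. Pf (\<lambda>j. Im (v $ j)) j - Im (v $ j)) i"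
      by (rule Pf_cong) (simp add: xi Im_sum_p Pf_def)
    moreover have "Im (x $ i) = Pf (\<lambda>j. Im (v $ j)) i - Im (v $ i)" by (simp add: xi[OF i] Im_sum_p Pf_def)
    ultimately show "Pf (\<lambda>j. Pf (\<lambda>j. Im (v $ j)) j - Im (v $ j)) i - (Pf (\<lambda>j. Im (v $ j)) i - Im (v $ i)) = 0"
      by simp
  qed
  obtain c1 c2 where c1: "\<And>i. i < n \<Longrightarrow> Re (v $ i) = c1 * perron i"
    and c2: "\<And>i. i < n \<Longrightarrow> Im (v $ i) = c2 * perron i" using re im by blast
  show ?thesis
  proof (rule exI[of _ "Complex c1 c2"], rule eq_vecI)
    fix i assume "i < dim_vec (Complex c1 c2 \<cdot>\<^sub>v vec n (\<lambda>j. complex_of_real (perron j)))"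
    hence i: "i < n" by simp
    show "v $ i = (Complex c1 c2 \<cdot>\<^sub>v vec n (\<lambda>j. complex_of_real (perron j))) $ i"
      using c1[OF i] c2[OF i] i by (simp add: complex_eq_iff)
  qed (use vc in simp)
qed

lemma perron_kernel: "vec n (\<lambda>j. complex_of_real (perron j)) \<in> mat_kernel (CM ^\<^sub>m 2)"
proof -
  let ?y = "vec n (\<lambda>j. complex_of_real (perron j))"
  have yc: "?y \<in> carrier_vec n" by simp
  have C1: "CM *\<^sub>v ?y = 0\<^sub>v n"
  proof (rule eq_vecI)
    fix i assume "i < dim_vec (0\<^sub>v n :: complex vec)" hence i: "i < n" by simp
    have "(\<Sum>j<n. complex_of_real (p i j) * ?y $ j) = complex_of_real (Pf perron i)"
      unfolding Pf_def by simp
    thus "(CM *\<^sub>v ?y) $ i = 0\<^sub>v n $ i" unfolding CM_vec[OF yc i] using perron(2)[OF i] i by simp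
  qed simp
  have "CM ^\<^sub>m 2 *\<^sub>v ?y = CM *\<^sub>v (CM *\<^sub>v ?y)"
    using yc by (simp add: numeral_2_eq_2 assoc_mult_mat_vec[of _ n n _ n])
  also have "\<dots> = 0\<^sub>v n" unfolding C1 by (rule eq_vecI) (auto simp: scalar_prod_def)
  finally show ?thesis by (intro mat_kernelI[of _ n n]) auto
qed

lemma kernel_dim_le1: "kernel_dim (CM ^\<^sub>m 2) \<le> 1"
proof -
  let ?y = "vec n (\<lambda>j. complex_of_real (perron j))"
  have C2: "CM ^\<^sub>m 2 \<in> carrier_mat n n" by simp
  interpret K: kernel n n "CM ^\<^sub>m 2" by (unfold_locales) (rule C2)
  have sub: "{?y} \<subseteq> mat_kernel (CM ^\<^sub>m 2)" using perron_kernel by simp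
  have gen: "K.span {?y} = mat_kernel (CM ^\<^sub>m 2)"
  proof
    show "K.span {?y} \<subseteq> mat_kernel (CM ^\<^sub>m 2)" using K.Ker.span_is_subset2[OF sub] by simp
    show "mat_kernel (CM ^\<^sub>m 2) \<subseteq> K.span {?y}"
    proof
      fix v assume v: "v \<in> mat_kernel (CM ^\<^sub>m 2)"
      then obtain c where c: "v = c \<cdot>\<^sub>v ?y" using kernel_sub by blast
      have sm: "submodule class_ring (K.span {?y}) K.VK" using K.Ker.span_is_submodule[OF sub] by simp
      have "?y \<in> K.span {?y}" using K.Ker.in_own_span[OF sub] by simp
      thus "v \<in> K.span {?y}" using sm unfolding c submodule_def by simp
    qed
  qed
  have "K.dim \<le> card {?y}" by (rule K.Ker.gen_ge_dim) (use sub gen in auto)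
  thus ?thesis by simp
qed

lemma sum_min2: "(\<forall>x\<in>set L. x > (0::nat)) \<Longrightarrow> sum_list (map (min 2) L) \<le> 1 \<Longrightarrow> sum_list L \<le> 1"
proof (induction L)
  case (Cons a L)
  thus ?case by (cases L) (auto simp: min_def split: if_splits)
qed simp

lemma order_Pm: "order 1 (char_poly Pm) = 1"
proof -
  obtain as where "char_poly Pm = (\<Prod>a\<leftarrow>as. [:- a, 1:])" using char_poly_factorized[OF Pm_carrier] by blast
  then obtain n_as where jnf: "jordan_nf Pm n_as" using jordan_nf_exists[OF Pm_carrier] by blast
  have d: "dim_gen_eigenspace Pm 1 2 \<le> 1"
    using kernel_dim_le1 unfolding dim_gen_eigenspace_def by simp
  have pos: "\<forall>x\<in>set (map fst [(n, e)\<leftarrow>n_as . e = 1]). x > 0"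
    using jnf unfolding jordan_nf_def by (force simp: image_iff)
  have "sum_list (map fst [(n, e)\<leftarrow>n_as . e = 1]) \<le> 1"
    by (rule sum_min2[OF pos]) (use d dim_gen_eigenspace[OF jnf, of 1 2] in simp)
  moreover have "order 1 (char_poly Pm) = sum_list (map fst [(n, e)\<leftarrow>n_as . e = 1])"
    unfolding jordan_nf_order[OF jnf] by (simp add: case_prod_unfold)
  moreover have "order 1 (char_poly Pm) \<noteq> 0"
  proof -
    have "poly (char_poly Pm) 1 = 0" using ev1 eigenvalue_root_char_poly[OF Pm_carrier] by simp
    moreover have "char_poly Pm \<noteq> 0"
      using degree_monic_char_poly[OF Pm_carrier] by auto
    ultimately show ?thesis using order_root by blast
  qed
  ultimately show ?thesis by linarith
qed


end




lemma smult_mat_vec: "X \<in> carrier_mat n n \<Longrightarrow> v \<in> carrier_vec n \<Longrightarrow>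
   ((c::complex) \<cdot>\<^sub>m X) *\<^sub>v v = c \<cdot>\<^sub>v (X *\<^sub>v v)"
  by (rule eq_vecI) (auto simp: scalar_prod_def sum_distrib_left mult.assoc)

lemma eigenvalue_smult:
  assumes c: "(c::complex) \<noteq> 0" and X: "X \<in> carrier_mat n n"
  shows "eigenvalue (c \<cdot>\<^sub>m X) l \<longleftrightarrow> eigenvalue X (l / c)"
proof
  assume "eigenvalue (c \<cdot>\<^sub>m X) l"
  then obtain v where v: "v \<in> carrier_vec n" "v \<noteq> 0\<^sub>v n" "(c \<cdot>\<^sub>m X) *\<^sub>v v = l \<cdot>\<^sub>v v"
    unfolding eigenvalue_def eigenvector_def using X by auto
  have "X *\<^sub>v v = (l / c) \<cdot>\<^sub>v v"
  proof (rule eq_vecI)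
    fix i assume "i < dim_vec ((l / c) \<cdot>\<^sub>v v)" hence i: "i < n" using v by simp
    have "c * (X *\<^sub>v v) $ i = l * v $ i"
      using arg_cong[OF v(3), of "\<lambda>x. x $ i"] smult_mat_vec[OF X v(1), of c] i X v(1) by simp
    thus "(X *\<^sub>v v) $ i = ((l / c) \<cdot>\<^sub>v v) $ i" using c i v by (simp add: field_simps)
  qed (use v X in simp)
  thus "eigenvalue X (l / c)" unfolding eigenvalue_def eigenvector_def using v X by auto
next
  assume "eigenvalue X (l / c)"
  then obtain v where v: "v \<in> carrier_vec n" "v \<noteq> 0\<^sub>v n" "X *\<^sub>v v = (l / c) \<cdot>\<^sub>v v"
    unfolding eigenvalue_def eigenvector_def using X by auto
  have "(c \<cdot>\<^sub>m X) *\<^sub>v v = l \<cdot>\<^sub>v v"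
    unfolding smult_mat_vec[OF X v(1)] v(3) using c by (rule_tac eq_vecI) auto
  thus "eigenvalue (c \<cdot>\<^sub>m X) l" unfolding eigenvalue_def eigenvector_def using v X by auto
qed

lemma zero_prop_gen:
  fixes q :: "nat \<Rightarrow> nat \<Rightarrow> real"
  assumes irr: "irreducible_on {..<n} q" and q: "\<And>i j. i < n \<Longrightarrow> j < n \<Longrightarrow> q i j \<ge> 0"
    and u: "\<And>j. j < n \<Longrightarrow> 0 \<le> u j" and sub: "\<And>i. i < n \<Longrightarrow> (\<Sum>j<n. q i j * u j) \<le> u i"
    and i: "i < n" "u i = 0" and j: "j < n"
  shows "u j = 0"
proof -
  have "(i, j) \<in> {(u, v). u \<in> {..<n} \<and> v \<in> {..<n} \<and> q u v > 0}\<^sup>*"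
    using irr i j unfolding irreducible_on_def by auto
  thus ?thesis
  proof (induction rule: rtrancl_induct)
    case base show ?case using i by simp
  next
    case (step a b)
    have ab: "a < n" "b < n" "q a b > 0" using step(2) by auto
    have nn: "\<And>l. l < n \<Longrightarrow> 0 \<le> q a l * u l" using u q ab by simp
    have "q a b * u b \<le> (\<Sum>l<n. q a l * u l)"
      by (rule member_le_sum[of b "{..<n}" "\<lambda>l. q a l * u l"]) (use ab nn in auto)
    also have "\<dots> \<le> 0" using sub[OF ab(1)] step(3) by simp
    finally have "q a b * u b \<le> 0" .
    moreover have "u b \<ge> 0" using u ab by simp
    ultimately show ?case using ab(3) by (simp add: mult_le_0_iff)
  qed
qed

locale mg1 =
  fixes M :: nat and A :: "nat \<Rightarrow> real mat" and \<theta> :: real and pi :: "nat \<Rightarrow> real"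
  assumes M_pos: "M > 0"
    and A_dim: "\<And>k. A k \<in> carrier_mat M M"
    and A_nonneg: "\<And>k i j. i < M \<Longrightarrow> j < M \<Longrightarrow> A k $$ (i, j) \<ge> 0"
    and A_summable: "\<And>i j. i < M \<Longrightarrow> j < M \<Longrightarrow> summable (\<lambda>k. A k $$ (i, j))"
    and A_stoch: "\<And>i. i < M \<Longrightarrow> (\<Sum>j<M. Asum A i j) = 1"
    and pi_stat: "\<And>j. j < M \<Longrightarrow> (\<Sum>i<M. pi i * Asum A i j) = pi j"
    and pi_norm: "(\<Sum>i<M. pi i) = 1"
    and A_irred: "irreducible_on {..<M} (Asum A)"
    and rho_lt1: "(\<Sum>i<M. pi i * (\<Sum>k. real k * (\<Sum>j<M. A k $$ (i, j)))) < 1"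
    and theta_gt1: "1 < \<theta>" and theta_lt: "ereal \<theta> < rA M A"
    and theta_delta: "complex_of_real \<theta> = delta (Astar M A (complex_of_real \<theta>))"
begin

abbreviation a :: "nat \<Rightarrow> nat \<Rightarrow> nat \<Rightarrow> real" where "a k i j \<equiv> A k $$ (i, j)"

lemma theta_conv: "i < M \<Longrightarrow> j < M \<Longrightarrow> ereal \<theta> < conv_radius (\<lambda>k. a k i j)"
proof -
  assume "i < M" "j < M"
  hence "rA M A \<le> conv_radius (\<lambda>k. A k $$ (i, j))" unfolding rA_def
    by (intro INF_lower) auto
  thus ?thesis using theta_lt by simp
qed

lemma ser_summable: "i < M \<Longrightarrow> j < M \<Longrightarrow> summable (\<lambda>k. \<theta> ^ k * a k i j)"
  using summable_in_conv_radius[of \<theta> "\<lambda>k. a k i j"] theta_conv theta_gt1 by (simp add: mult.commute)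

lemma ser_nonneg: "i < M \<Longrightarrow> j < M \<Longrightarrow> 0 \<le> \<theta> ^ k * a k i j"
  using theta_gt1 A_nonneg by simp

lemma cser_summable:
  assumes "i < M" "j < M" "cmod w = 1"
  shows "summable (\<lambda>k. (complex_of_real \<theta> * w) ^ k * complex_of_real (a k i j))"
proof (rule summable_norm_cancel)
  have "(\<lambda>k. norm ((complex_of_real \<theta> * w) ^ k * complex_of_real (a k i j))) = (\<lambda>k. \<theta> ^ k * a k i j)"
    using assms theta_gt1 A_nonneg by (auto simp: norm_mult norm_power)
  thus "summable (\<lambda>k. norm ((complex_of_real \<theta> * w) ^ k * complex_of_real (a k i j)))"
    using ser_summable assms by simp
qed

definition p :: "nat \<Rightarrow> nat \<Rightarrow> real" where
  "p i j = (\<Sum>k. \<theta> ^ k * a k i j) / \<theta>"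

lemma p_nonneg: "i < M \<Longrightarrow> j < M \<Longrightarrow> p i j \<ge> 0"
  unfolding p_def using theta_gt1 by (intro divide_nonneg_pos suminf_nonneg ser_summable ser_nonneg) auto

lemma Asum_pos_iff: "i < M \<Longrightarrow> j < M \<Longrightarrow> Asum A i j > 0 \<longleftrightarrow> (\<exists>k. a k i j > 0)"
  unfolding Asum_def by (rule suminf_pos_iff) (auto simp: A_summable A_nonneg)

lemma p_pos_iff: "i < M \<Longrightarrow> j < M \<Longrightarrow> p i j > 0 \<longleftrightarrow> (\<exists>k. a k i j > 0)"
proof -
  assume ij: "i < M" "j < M"
  have "p i j > 0 \<longleftrightarrow> (\<Sum>k. \<theta> ^ k * a k i j) > 0" unfolding p_def using theta_gt1 by (simp add: zero_less_divide_iff)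
  also have "\<dots> \<longleftrightarrow> (\<exists>k. \<theta> ^ k * a k i j > 0)"
    by (rule suminf_pos_iff) (use ij in \<open>auto simp: ser_summable ser_nonneg\<close>)
  also have "\<dots> \<longleftrightarrow> (\<exists>k. a k i j > 0)" using theta_gt1 by (simp add: zero_less_mult_iff)
  finally show ?thesis .
qed

lemma p_irred: "irreducible_on {..<M} p"
proof -
  have eq: "{(u, v). u \<in> {..<M} \<and> v \<in> {..<M} \<and> Asum A u v > 0} = {(u, v). u \<in> {..<M} \<and> v \<in> {..<M} \<and> p u v > 0}"
    using Asum_pos_iff p_pos_iff by auto
  show ?thesis using A_irred unfolding irreducible_on_def eq .
qed

abbreviation Pm :: "complex mat" where "Pm \<equiv> mat M M (\<lambda>(i,j). complex_of_real (p i j))"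

lemma Astar_carrier: "Astar M A z \<in> carrier_mat M M" unfolding Astar_def by simp

lemma Gamma_carrier: "GammaStar M A z \<in> carrier_mat M M" unfolding GammaStar_def Astar_def by simp

lemma Gamma_entry: "i < M \<Longrightarrow> j < M \<Longrightarrow>
   GammaStar M A z $$ (i, j) = inverse z * (\<Sum>k. z ^ k * complex_of_real (a k i j))"
  unfolding GammaStar_def Astar_def by simp

lemma Pm_Gamma: "GammaStar M A (complex_of_real \<theta>) = Pm"
proof (rule eq_matI)
  fix i j assume "i < dim_row Pm" "j < dim_col Pm" hence ij: "i < M" "j < M" by auto
  have "complex_of_real (\<Sum>k. \<theta> ^ k * a k i j) = (\<Sum>k. complex_of_real (\<theta> ^ k * a k i j))"
    by (rule suminf_of_real[OF ser_summable[OF ij]])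
  hence "(\<Sum>k. complex_of_real \<theta> ^ k * complex_of_real (a k i j)) = complex_of_real (\<Sum>k. \<theta> ^ k * a k i j)"
    by simp
  thus "GammaStar M A (complex_of_real \<theta>) $$ (i, j) = Pm $$ (i, j)"
    unfolding Gamma_entry[OF ij] p_def using ij by (simp add: divide_inverse mult.commute)
qed (auto simp: GammaStar_def Astar_def)

lemma Astar_theta: "eigenvalue (Astar M A (complex_of_real \<theta>)) (complex_of_real \<theta>)"
  "\<And>m. eigenvalue (Astar M A (complex_of_real \<theta>)) m \<Longrightarrow> cmod m \<le> \<theta>"
  using delta_prop[OF Astar_carrier[of "complex_of_real \<theta>"] M_pos] unfolding theta_delta[symmetric]
  using theta_gt1 by auto

lemma Pm_ev1: "eigenvalue Pm 1"
proof -
  have "eigenvalue (inverse (complex_of_real \<theta>) \<cdot>\<^sub>m Astar M A (complex_of_real \<theta>)) 1"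
    using Astar_theta(1) theta_gt1 by (subst eigenvalue_smult[OF _ Astar_carrier]) (auto simp: divide_inverse)
  thus ?thesis unfolding Pm_Gamma[symmetric] GammaStar_def .
qed

lemma Pm_ev_le1: "eigenvalue Pm l \<Longrightarrow> cmod l \<le> 1"
proof -
  assume "eigenvalue Pm l"
  hence "eigenvalue (inverse (complex_of_real \<theta>) \<cdot>\<^sub>m Astar M A (complex_of_real \<theta>)) l"
    unfolding Pm_Gamma[symmetric] GammaStar_def .
  hence "eigenvalue (Astar M A (complex_of_real \<theta>)) (l * complex_of_real \<theta>)"
    using theta_gt1 by (subst (asm) eigenvalue_smult[OF _ Astar_carrier]) (auto simp: divide_inverse)
  hence "cmod (l * complex_of_real \<theta>) \<le> \<theta>" by (rule Astar_theta(2))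
  thus "cmod l \<le> 1" using theta_gt1 by (simp add: norm_mult)
qed

sublocale nn: nnmat M p
  by unfold_locales (use M_pos p_nonneg p_irred Pm_ev_le1 Pm_ev1 in auto)


abbreviation C :: "complex \<Rightarrow> complex mat" where "C w \<equiv> GammaStar M A (complex_of_real \<theta> * w)"

lemma C_vec: "v \<in> carrier_vec M \<Longrightarrow> i < M \<Longrightarrow> (C w *\<^sub>v v) $ i = (\<Sum>j<M. C w $$ (i, j) * v $ j)"
proof -
  assume v: "v \<in> carrier_vec M" and i: "i < M"
  have d: "dim_row (C w) = M" "dim_col (C w) = M" using carrier_matD[OF Gamma_carrier] by auto
  show ?thesis using v i by (simp add: scalar_prod_def lessThan_atLeast0 d)
qed

lemma C_bound:
  assumes w: "cmod w = 1" and ij: "i < M" "j < M"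
  shows "cmod (C w $$ (i, j)) \<le> p i j"
proof -
  let ?f = "\<lambda>k. (complex_of_real \<theta> * w) ^ k * complex_of_real (a k i j)"
  have nf: "(\<lambda>k. norm (?f k)) = (\<lambda>k. \<theta> ^ k * a k i j)"
    using w theta_gt1 A_nonneg ij by (auto simp: norm_mult norm_power)
  have "cmod (C w $$ (i, j)) = cmod (suminf ?f) / \<theta>"
    unfolding Gamma_entry[OF ij] using w theta_gt1 by (simp add: norm_mult norm_inverse divide_inverse)
  also have "\<dots> \<le> (\<Sum>k. \<theta> ^ k * a k i j) / \<theta>"
    using summable_norm[of ?f] ser_summable[OF ij] theta_gt1 unfolding nf
    by (intro divide_right_mono) auto
  finally show ?thesis unfolding p_def .
qed

lemma C_ev_le1:
  assumes w: "cmod w = 1" and ev: "eigenvalue (C w) l"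
  shows "cmod l \<le> 1"
proof (rule ccontr)
  assume l: "\<not> cmod l \<le> 1"
  obtain v where v: "v \<in> carrier_vec M" "v \<noteq> 0\<^sub>v M" "C w *\<^sub>v v = l \<cdot>\<^sub>v v"
    using ev Gamma_carrier unfolding eigenvalue_def eigenvector_def by (metis carrier_matD(1))
  obtain j0 where j0: "j0 < M" "v $ j0 \<noteq> 0" using v(1,2) by (metis eq_vecI carrier_vecD index_zero_vec)
  define y where "y = (\<lambda>j. cmod (v $ j))"
  show False
  proof (rule nn.no_growth[of y j0 "cmod l"])
    show "\<And>j. j < M \<Longrightarrow> 0 \<le> y j" "j0 < M" "0 < y j0" "1 < cmod l" using j0 l unfolding y_def by auto
    fix i assume i: "i < M"
    have "l * v $ i = (C w *\<^sub>v v) $ i" using v i by simp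
    also have "\<dots> = (\<Sum>j<M. C w $$ (i, j) * v $ j)" by (rule C_vec[OF v(1) i])
    finally have "cmod l * y i = cmod (\<Sum>j<M. C w $$ (i, j) * v $ j)" unfolding y_def
      by (metis norm_mult)
    also have "\<dots> \<le> (\<Sum>j<M. cmod (C w $$ (i, j)) * y j)"
      unfolding y_def by (rule order_trans[OF norm_sum]) (simp add: norm_mult)
    also have "\<dots> \<le> (\<Sum>j<M. p i j * y j)"
      using C_bound[OF w i] unfolding y_def by (intro sum_mono mult_right_mono) auto
    finally show "cmod l * y i \<le> nn.Pf y i" unfolding nn.Pf_def .
  qed
qed

lemma delta_C_iff: "cmod w = 1 \<Longrightarrow> delta (C w) = 1 \<longleftrightarrow> eigenvalue (C w) 1"
  using delta_prop[OF Gamma_carrier M_pos] delta_eq_1 C_ev_le1 by metis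

lemma unit_Re1: "cmod (z::complex) = 1 \<Longrightarrow> Re z = 1 \<Longrightarrow> z = 1"
  by (simp add: cmod_def complex_eq_iff)



lemma C_phase:
  assumes w: "cmod w = 1" and ev: "eigenvalue (C w) 1"
  shows "\<exists>u. (\<forall>i<M. u i \<noteq> 0) \<and>
     (\<forall>k i j. i < M \<longrightarrow> j < M \<longrightarrow> a k i j > 0 \<longrightarrow> u i = w ^ k * inverse w * u j)"
proof -
  have w0: "w \<noteq> 0" using w by auto
  obtain v where v: "v \<in> carrier_vec M" "v \<noteq> 0\<^sub>v M" "C w *\<^sub>v v = 1 \<cdot>\<^sub>v v"
    using ev Gamma_carrier unfolding eigenvalue_def eigenvector_def by (metis carrier_matD(1))
  obtain j0 where j0: "j0 < M" "v $ j0 \<noteq> 0" using v(1,2) by (metis eq_vecI carrier_vecD index_zero_vec)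
  define y where "y = (\<lambda>j. cmod (v $ j))"
  have y0: "\<And>j. j < M \<Longrightarrow> 0 \<le> y j" unfolding y_def by auto
  have vi: "v $ i = (\<Sum>j<M. C w $$ (i, j) * v $ j)" if i: "i < M" for i
  proof -
    have "v $ i = (C w *\<^sub>v v) $ i" using v i by simp
    also have "\<dots> = (\<Sum>j<M. C w $$ (i, j) * v $ j)" by (rule C_vec[OF v(1) i])
    finally show ?thesis .
  qed
  have ge: "y i \<le> nn.Pf y i" if i: "i < M" for i
  proof -
    have "y i = cmod (\<Sum>j<M. C w $$ (i, j) * v $ j)" unfolding y_def using vi[OF i] by simp
    also have "\<dots> \<le> (\<Sum>j<M. cmod (C w $$ (i, j)) * y j)"
      unfolding y_def by (rule order_trans[OF norm_sum]) (simp add: norm_mult)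
    also have "\<dots> \<le> (\<Sum>j<M. p i j * y j)"
      using C_bound[OF w i] unfolding y_def by (intro sum_mono mult_right_mono) auto
    finally show ?thesis unfolding nn.Pf_def .
  qed
  have yj0: "y j0 > 0" unfolding y_def using j0 by auto
  have yfix: "\<And>i. i < M \<Longrightarrow> nn.Pf y i = y i" using nn.eq_of_ge[OF y0 j0(1) yj0 ge] by auto
  have ypos: "\<And>i. i < M \<Longrightarrow> y i > 0" using nn.pos_of_fix[OF y0 _ j0(1)] yfix yj0 by force
  define u where "u = (\<lambda>j. v $ j / complex_of_real (y j))"
  have u1: "cmod (u j) = 1" if j: "j < M" for j
    unfolding u_def y_def using ypos[OF j] unfolding y_def by (simp add: norm_divide)
  have vu: "v $ j = complex_of_real (y j) * u j" if j: "j < M" for j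
    unfolding u_def using ypos[OF j] by simp
  have cu: "cnj (u j) * u j = 1" if j: "j < M" for j
    using u1[OF j] complex_norm_square[of "u j"] by (simp add: mult.commute)
  have edge: "u i = w ^ k * inverse w * u j" if ij: "i < M" "j < M" and ak: "a k i j > 0" for k i j
  proof -
    define g where "g = (\<lambda>j k. (y j / \<theta>) * (\<theta> ^ k * a k i j))"
    define z where "z = (\<lambda>j k. cnj (u i) * w ^ k * inverse w * u j)"
    have z1: "cmod (z j k) = 1" if "j < M" for j k
      unfolding z_def using u1 that ij w by (simp add: norm_mult norm_power norm_inverse)
    have g0: "0 \<le> g j k" if "j < M" for j k unfolding g_def
      using ypos[OF that] theta_gt1 ser_nonneg[OF ij(1) that] by simp
    have gs: "summable (g j)" if "j < M" for j
      unfolding g_def by (intro summable_mult ser_summable ij that)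
    have gzs: "summable (\<lambda>k. complex_of_real (g j k) * z j k)" if j: "j < M" for j
    proof (rule summable_norm_cancel)
      have "(\<lambda>k. norm (complex_of_real (g j k) * z j k)) = g j" using z1[OF j] g0[OF j]
        by (auto simp: norm_mult)
      thus "summable (\<lambda>k. norm (complex_of_real (g j k) * z j k))" using gs[OF j] by simp
    qed
    have A: "complex_of_real (y i) = (\<Sum>j<M. \<Sum>k. complex_of_real (g j k) * z j k)"
    proof -
      have "complex_of_real (y i) = cnj (u i) * v $ i"
        using vu[OF ij(1)] cu[OF ij(1)] by (simp add: mult.commute mult.left_commute)
      also have "\<dots> = (\<Sum>j<M. cnj (u i) * (C w $$ (i, j) * v $ j))"
        unfolding vi[OF ij(1)] by (simp add: sum_distrib_left)
      also have "\<dots> = (\<Sum>j<M. \<Sum>k. complex_of_real (g j k) * z j k)"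
      proof (rule sum.cong[OF refl])
        fix j assume "j \<in> {..<M}" hence j: "j < M" by simp
        let ?f = "\<lambda>k. (complex_of_real \<theta> * w) ^ k * complex_of_real (a k i j)"
        have "cnj (u i) * (C w $$ (i, j) * v $ j)
            = (cnj (u i) * inverse (complex_of_real \<theta> * w) * v $ j) * suminf ?f"
          unfolding Gamma_entry[OF ij(1) j] by (simp add: algebra_simps)
        also have "\<dots> = (\<Sum>k. (cnj (u i) * inverse (complex_of_real \<theta> * w) * v $ j) * ?f k)"
          by (rule suminf_mult[symmetric]) (rule cser_summable[OF ij(1) j w])
        also have "\<dots> = (\<Sum>k. complex_of_real (g j k) * z j k)"
        proof (rule arg_cong[where f = suminf], rule ext)
          fix k
          show "(cnj (u i) * inverse (complex_of_real \<theta> * w) * v $ j) * ?f k = complex_of_real (g j k) * z j k"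
            unfolding g_def z_def vu[OF j]
            by (simp add: inverse_mult_distrib power_mult_distrib divide_inverse mult_ac)
        qed
        finally show "cnj (u i) * (C w $$ (i, j) * v $ j) = (\<Sum>k. complex_of_real (g j k) * z j k)" .
      qed
      finally show ?thesis .
    qed
    have B: "y i = (\<Sum>j<M. suminf (g j))"
    proof -
      have "y i = nn.Pf y i" using yfix[OF ij(1)] by simp
      also have "\<dots> = (\<Sum>j<M. suminf (g j))" unfolding nn.Pf_def
      proof (rule sum.cong[OF refl])
        fix j assume "j \<in> {..<M}" hence j: "j < M" by simp
        show "p i j * y j = suminf (g j)" unfolding g_def p_def
          by (subst suminf_mult[OF ser_summable[OF ij(1) j]]) (simp add: field_simps)
      qed
      finally show ?thesis .
    qed
    have ReA: "y i = (\<Sum>j<M. \<Sum>k. g j k * Re (z j k))"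
    proof -
      have "y i = Re (complex_of_real (y i))" by simp
      also have "\<dots> = (\<Sum>j<M. Re (\<Sum>k. complex_of_real (g j k) * z j k))" unfolding A by (simp add: Re_sum)
      also have "\<dots> = (\<Sum>j<M. \<Sum>k. g j k * Re (z j k))"
      proof (rule sum.cong[OF refl])
        fix j assume "j \<in> {..<M}" hence j: "j < M" by simp
        show "Re (\<Sum>k. complex_of_real (g j k) * z j k) = (\<Sum>k. g j k * Re (z j k))"
          using Re_suminf[OF gzs[OF j]] by simp
      qed
      finally show ?thesis .
    qed
    have gzr: "summable (\<lambda>k. g j k * Re (z j k))" if j: "j < M" for j
      using summable_Re[OF gzs[OF j]] by simp
    define D where "D = (\<lambda>j. \<Sum>k. g j k * (1 - Re (z j k)))"
    have Dnn: "\<And>k. 0 \<le> g j k * (1 - Re (z j k))" if j: "j < M" for j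
      using g0[OF j] complex_Re_le_cmod[of "z j _"] z1[OF j] by (simp add: mult_nonneg_nonneg)
    have Ds: "summable (\<lambda>k. g j k * (1 - Re (z j k)))" if j: "j < M" for j
      using summable_diff[OF gs[OF j] gzr[OF j]] by (simp add: algebra_simps)
    have Deq: "D j = suminf (g j) - (\<Sum>k. g j k * Re (z j k))" if j: "j < M" for j
      unfolding D_def using suminf_diff[OF gs[OF j] gzr[OF j]] by (simp add: algebra_simps)
    have "(\<Sum>j<M. D j) = 0" using B ReA Deq by (simp add: sum_subtractf)
    moreover have "\<And>j. j \<in> {..<M} \<Longrightarrow> 0 \<le> D j" unfolding D_def using Dnn Ds
      by (auto intro!: suminf_nonneg)
    ultimately have "D j = 0" using sum_nonneg_eq_0_iff[of "{..<M}" D] ij by auto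
    hence "\<forall>k. g j k * (1 - Re (z j k)) = 0" unfolding D_def
      using suminf_eq_zero_iff[OF Ds[OF ij(2)] Dnn[OF ij(2)]] by simp
    moreover have "g j k > 0" unfolding g_def using ypos[OF ij(2)] theta_gt1 ak by simp
    ultimately have "Re (z j k) = 1" by (metis mult_eq_0_iff less_irrefl eq_iff_diff_eq_0)
    hence "z j k = 1" using unit_Re1 z1[OF ij(2)] by blast
    define X where "X = w ^ k * inverse w * u j"
    have zX: "z j k = cnj (u i) * X" unfolding z_def X_def by (simp only: mult.assoc)
    have ui: "u i * cnj (u i) = 1" using cu[OF ij(1)] by (simp only: mult.commute)
    have "u i = u i * z j k" using \<open>z j k = 1\<close> by simp
    also have "\<dots> = (u i * cnj (u i)) * X" unfolding zX by (simp only: mult.assoc)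
    also have "\<dots> = X" unfolding ui by simp
    finally show ?thesis unfolding X_def .
  qed
  have "\<forall>i<M. u i \<noteq> 0" using u1 by (metis norm_zero zero_neq_one)
  thus ?thesis using edge by blast
qed


end




lemma edge_powi: "(w::complex) \<noteq> 0 \<Longrightarrow> w ^ K * inverse w = w powi (int K - 1)"
  by (simp add: power_int_diff divide_inverse)

lemma gcd_powi:
  fixes S :: "int set" and w :: complex
  assumes w0: "w \<noteq> 0" and S: "\<And>s. s \<in> S \<Longrightarrow> w powi s = 1"
  shows "w powi (Gcd S) = 1"
proof (cases "S \<subseteq> {0}")
  case True
  hence "0 dvd Gcd S" by (intro Gcd_greatest) auto
  hence g: "Gcd S = 0" by simp
  show ?thesis by (subst g) simp
next
  case False
  then obtain s0 where s0: "s0 \<in> S" "s0 \<noteq> 0" by auto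
  have "w powi \<bar>s0\<bar> = 1"
  proof (cases "s0 \<ge> 0")
    case True thus ?thesis using S[OF s0(1)] by simp
  next
    case False
    hence "\<bar>s0\<bar> = - s0" by simp
    thus ?thesis using S[OF s0(1)] by (simp add: power_int_minus)
  qed
  hence ex: "\<exists>d::nat. d > 0 \<and> w ^ d = 1" using s0(2)
    by (intro exI[of _ "nat \<bar>s0\<bar>"]) (metis power_int_of_nat int_nat_eq abs_ge_zero zero_less_abs_iff zero_less_nat_eq)
  define m where "m = (LEAST d::nat. d > 0 \<and> w ^ d = 1)"
  have m: "m > 0" "w ^ m = 1" using LeastI_ex[OF ex] unfolding m_def by auto
  have dvd: "int m dvd s" if s: "s \<in> S" for s
  proof -
    have "s = int m * (s div int m) + s mod int m" by simp
    hence "w powi s = (w powi int m) powi (s div int m) * w powi (s mod int m)"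
      using w0 by (metis power_int_add power_int_mult)
    hence "w powi (s mod int m) = 1" using S[OF s] m by simp
    moreover have r: "0 \<le> s mod int m" "s mod int m < int m" using m by auto
    ultimately have "w ^ nat (s mod int m) = 1" by (metis power_int_of_nat int_nat_eq)
    moreover have "nat (s mod int m) < m" using r by simp
    ultimately have "\<not> nat (s mod int m) > 0" using not_less_Least[of "nat (s mod int m)" "\<lambda>d. d > 0 \<and> w ^ d = 1"]
      unfolding m_def[symmetric] by auto
    hence "s mod int m = 0" using r by simp
    thus ?thesis by (simp add: dvd_eq_mod_eq_0)
  qed
  hence "int m dvd Gcd S" by (intro Gcd_greatest) auto
  then obtain q where q: "Gcd S = int m * q" by (auto elim: dvdE)
  show ?thesis unfolding q using w0 m by (simp add: power_int_mult)
qed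

context mg1
begin

abbreviation step :: "((int \<times> nat) \<times> (int \<times> nat)) set" where "step \<equiv> map_step M A"

definition Sset :: "int set" where
  "Sset = {k. k \<noteq> 0 \<and> ((0, 0), (k, 0)) \<in> step\<^sup>+}"

lemma tau_eq: "int (tau M A) = Gcd Sset"
  unfolding tau_def period_at_def Sset_def by simp

lemma path_phase:
  fixes w :: complex and u :: "nat \<Rightarrow> complex"
  assumes w0: "w \<noteq> 0"
    and edge: "\<And>k i j. i < M \<Longrightarrow> j < M \<Longrightarrow> a k i j > 0 \<Longrightarrow> u i = w ^ k * inverse w * u j"
    and path: "(x, y) \<in> step\<^sup>*"
  shows "u (snd x) = w powi (fst y - fst x) * u (snd y)"
  using path
proof (induction rule: rtrancl_induct)
  case base show ?case by simp
next
  case (step y z)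
  obtain l1 j where y: "y = (l1, j)" by force
  obtain l2 m where z: "z = (l2, m)" by force
  have d: "j < M" "m < M" "l2 - l1 \<ge> -1" "a (nat (l2 - l1 + 1)) j m > 0"
    using step(2) unfolding y z map_step_def by auto
  have "u j = w powi (int (nat (l2 - l1 + 1)) - 1) * u m"
    using edge[OF d(1,2,4)] edge_powi[OF w0] by simp
  also have "int (nat (l2 - l1 + 1)) - 1 = l2 - l1" using d(3) by simp
  finally have uj: "u j = w powi (l2 - l1) * u m" .
  have "u (snd x) = w powi (l1 - fst x) * (w powi (l2 - l1) * u m)" using step(3) uj unfolding y by simp
  also have "\<dots> = (w powi (l1 - fst x) * w powi (l2 - l1)) * u m" by (simp only: mult.assoc)
  also have "w powi (l1 - fst x) * w powi (l2 - l1) = w powi (l1 - fst x + (l2 - l1))"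
    by (rule power_int_add[OF disjI1[OF w0], symmetric])
  finally show ?case unfolding z by simp
qed

lemma C_to_tau:
  assumes w: "cmod w = 1" and ev: "eigenvalue (C w) 1"
  shows "w ^ tau M A = 1"
proof -
  have w0: "w \<noteq> 0" using w by auto
  obtain u where u0: "\<And>i. i < M \<Longrightarrow> u i \<noteq> 0"
    and edge: "\<And>k i j. i < M \<Longrightarrow> j < M \<Longrightarrow> a k i j > 0 \<Longrightarrow> u i = w ^ k * inverse w * u j"
    using C_phase[OF w ev] by blast
  have "w powi s = 1" if s: "s \<in> Sset" for s
  proof -
    have "((0, 0), (s, 0)) \<in> step\<^sup>*" using s unfolding Sset_def by auto
    from path_phase[OF w0 edge this] have "u 0 = w powi s * u 0" by simp
    thus ?thesis using u0[OF M_pos] by simp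
  qed
  hence "w powi (Gcd Sset) = 1" by (rule gcd_powi[OF w0])
  thus ?thesis unfolding tau_eq[symmetric] by simp
qed

lemma step_shift:
  assumes "(x, y) \<in> step\<^sup>*"
  shows "((fst x + t, snd x), (fst y + t, snd y)) \<in> step\<^sup>*"
  using assms
proof (induction rule: rtrancl_induct)
  case (step y z)
  have "((fst y + t, snd y), (fst z + t, snd z)) \<in> step"
    using step(2) unfolding map_step_def by auto
  thus ?case by (rule rtrancl_into_rtrancl[OF step(3)])
qed simp

lemma step_edge: "i < M \<Longrightarrow> j < M \<Longrightarrow> a k i j > 0 \<Longrightarrow> ((l, i), (l + int k - 1, j)) \<in> step"
  unfolding map_step_def by auto

lemma reach_MAP:
  assumes i: "i < M" and j: "j < M"
  shows "\<exists>l. ((0, i), (l, j)) \<in> step\<^sup>*"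
proof -
  have "(i, j) \<in> {(u, v). u \<in> {..<M} \<and> v \<in> {..<M} \<and> Asum A u v > 0}\<^sup>*"
    using A_irred i j unfolding irreducible_on_def by auto
  thus ?thesis
  proof (induction rule: rtrancl_induct)
    case base show ?case by auto
  next
    case (step j m)
    then obtain l where l: "((0, i), (l, j)) \<in> step\<^sup>*" by blast
    have jm: "j < M" "m < M" "Asum A j m > 0" using step(2) by auto
    then obtain k where k: "a k j m > 0" using Asum_pos_iff by blast
    have "((l, j), (l + int k - 1, m)) \<in> step" by (rule step_edge[OF jm(1,2) k])
    thus ?case using l by (meson rtrancl_into_rtrancl)
  qed
qed

definition h :: "nat \<Rightarrow> int" where
  "h j = (SOME l. ((0, 0), (l, j)) \<in> step\<^sup>*)"

lemma h_path: "j < M \<Longrightarrow> ((0, 0), (h j, j)) \<in> step\<^sup>*"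
  unfolding h_def using reach_MAP[OF M_pos] by (rule someI_ex) auto

lemma Gcd_dvd_loop: "((0, 0), (s, 0)) \<in> step\<^sup>* \<Longrightarrow> Gcd Sset dvd s"
proof -
  assume p: "((0, 0), (s, 0)) \<in> step\<^sup>*"
  show ?thesis
  proof (cases "s = 0")
    case False
    hence "((0, 0), (s, 0)) \<in> step\<^sup>+" using p by (metis Pair_inject rtranclD)
    hence "s \<in> Sset" using False unfolding Sset_def by auto
    thus ?thesis by (rule Gcd_dvd)
  qed simp
qed

lemma K1:
  assumes i: "i < M" and j: "j < M" and ak: "a k i j > 0"
  shows "Gcd Sset dvd (int k - 1 - (h j - h i))"
proof -
  obtain e where e: "((0, j), (e, 0)) \<in> step\<^sup>*" using reach_MAP[OF j M_pos] by blast
  have p1: "((0, 0), (h i + int k - 1, j)) \<in> step\<^sup>*"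
    using h_path[OF i] step_edge[OF i j ak, of "h i"] by (meson rtrancl_into_rtrancl)
  have "((h i + int k - 1, j), (e + (h i + int k - 1), 0)) \<in> step\<^sup>*"
    using step_shift[OF e, of "h i + int k - 1"] by simp
  hence "((0, 0), (e + (h i + int k - 1), 0)) \<in> step\<^sup>*" using p1 by simp
  hence d1: "Gcd Sset dvd (e + (h i + int k - 1))" by (rule Gcd_dvd_loop)
  have "((h j, j), (e + h j, 0)) \<in> step\<^sup>*" using step_shift[OF e, of "h j"] by simp
  hence "((0, 0), (e + h j, 0)) \<in> step\<^sup>*" using h_path[OF j] by simp
  hence d2: "Gcd Sset dvd (e + h j)" by (rule Gcd_dvd_loop)
  have "int k - 1 - (h j - h i) = (e + (h i + int k - 1)) - (e + h j)" by simp
  thus ?thesis using d1 d2 by (metis dvd_diff)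
qed

end


lemma diag_mult_left:
  assumes X: "X \<in> carrier_mat n n" and ij: "i < n" "j < n"
  shows "(mat n n (\<lambda>(i,j). if i = j then d i else 0) * X) $$ (i, j) = d i * X $$ (i, j)"
proof -
  have "(mat n n (\<lambda>(i,j). if i = j then d i else 0) * X) $$ (i, j)
      = (\<Sum>l\<in>{0..<n}. (if i = l then d i else 0) * X $$ (l, j))"
    using X ij by (simp add: scalar_prod_def)
  also have "\<dots> = (\<Sum>l\<in>{0..<n}. if i = l then d i * X $$ (l, j) else 0)"
    by (rule sum.cong) auto
  also have "\<dots> = d i * X $$ (i, j)" using ij by simp
  finally show ?thesis .
qed

lemma diag_mult_right:
  assumes X: "X \<in> carrier_mat n n" and ij: "i < n" "j < n"
  shows "(X * mat n n (\<lambda>(i,j). if i = j then d i else 0)) $$ (i, j) = X $$ (i, j) * d j"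
proof -
  have "(X * mat n n (\<lambda>(i,j). if i = j then d i else 0)) $$ (i, j)
      = (\<Sum>l\<in>{0..<n}. X $$ (i, l) * (if l = j then d l else 0))"
    using X ij by (simp add: scalar_prod_def)
  also have "\<dots> = (\<Sum>l\<in>{0..<n}. if l = j then X $$ (i, l) * d j else 0)"
    by (rule sum.cong) auto
  also have "\<dots> = X $$ (i, j) * d j" using ij by simp
  finally show ?thesis .
qed

context mg1
begin

lemma C_entry_tau:
  assumes w: "cmod w = 1" and wt: "w ^ tau M A = 1" and ij: "i < M" "j < M"
  shows "C w $$ (i, j) = w powi (h j - h i) * complex_of_real (p i j)"
proof -
  have w0: "w \<noteq> 0" using w by auto
  have wG: "w powi (Gcd Sset) = 1" using wt unfolding tau_eq[symmetric] by simp
  have edge: "w ^ k = w * w powi (h j - h i)" if ak: "a k i j > 0" for k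
  proof -
    obtain q where q: "int k - 1 - (h j - h i) = Gcd Sset * q" using K1[OF ij ak] by (auto elim: dvdE)
    have "w ^ k * inverse w = w powi (int k - 1)" by (rule edge_powi[OF w0])
    also have "int k - 1 = (h j - h i) + Gcd Sset * q" using q by simp
    also have "w powi ((h j - h i) + Gcd Sset * q) = w powi (h j - h i) * (w powi Gcd Sset) powi q"
      using w0 by (simp add: power_int_add power_int_mult)
    finally have "w ^ k * inverse w = w powi (h j - h i)" using wG by simp
    thus ?thesis using w0 by (metis mult.commute nonzero_eq_divide_eq divide_inverse)
  qed
  let ?c = "w * w powi (h j - h i)"
  have trm: "(complex_of_real \<theta> * w) ^ k * complex_of_real (a k i j) = ?c * complex_of_real (\<theta> ^ k * a k i j)" for k
  proof (cases "a k i j > 0")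
    case True thus ?thesis using edge[OF True] by (simp add: power_mult_distrib mult_ac)
  next
    case False hence "a k i j = 0" using A_nonneg[OF ij, of k] by linarith
    thus ?thesis by simp
  qed
  have "(\<Sum>k. (complex_of_real \<theta> * w) ^ k * complex_of_real (a k i j)) = (\<Sum>k. ?c * complex_of_real (\<theta> ^ k * a k i j))"
    unfolding trm ..
  also have "\<dots> = ?c * (\<Sum>k. complex_of_real (\<theta> ^ k * a k i j))"
    by (rule suminf_mult) (rule summable_of_real[OF ser_summable[OF ij]])
  also have "(\<Sum>k. complex_of_real (\<theta> ^ k * a k i j)) = complex_of_real (\<Sum>k. \<theta> ^ k * a k i j)"
    by (rule suminf_of_real[OF ser_summable[OF ij], symmetric])
  finally have S: "(\<Sum>k. (complex_of_real \<theta> * w) ^ k * complex_of_real (a k i j)) = ?c * complex_of_real (\<Sum>k. \<theta> ^ k * a k i j)" .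
  show ?thesis unfolding Gamma_entry[OF ij] S p_def using w0 theta_gt1
    by (simp add: field_simps)
qed

lemma tau_similar:
  assumes w: "cmod w = 1" and wt: "w ^ tau M A = 1"
  shows "similar_mat (C w) Pm"
proof -
  have w0: "w \<noteq> 0" using w by auto
  define D where "D = mat M M (\<lambda>(i,j). if i = j then w powi h i else 0)"
  define Di where "Di = mat M M (\<lambda>(i,j). if i = j then w powi (- h i) else 0)"
  have Dc: "D \<in> carrier_mat M M" "Di \<in> carrier_mat M M" unfolding D_def Di_def by auto
  have one: "1\<^sub>m M \<in> carrier_mat M M" by simp
  have DiD: "Di * D = 1\<^sub>m M"
  proof (rule eq_matI)
    fix i j assume "i < dim_row (1\<^sub>m M :: complex mat)" "j < dim_col (1\<^sub>m M :: complex mat)"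
    hence ij: "i < M" "j < M" by auto
    have "(Di * D) $$ (i, j) = w powi (- h i) * D $$ (i, j)"
      unfolding Di_def by (rule diag_mult_left[OF Dc(1) ij])
    thus "(Di * D) $$ (i, j) = 1\<^sub>m M $$ (i, j)" using ij w0 unfolding D_def
      by (simp add: power_int_minus)
  qed (use Dc in auto)
  have DDi: "D * Di = 1\<^sub>m M"
  proof (rule eq_matI)
    fix i j assume "i < dim_row (1\<^sub>m M :: complex mat)" "j < dim_col (1\<^sub>m M :: complex mat)"
    hence ij: "i < M" "j < M" by auto
    have "(D * Di) $$ (i, j) = w powi (h i) * Di $$ (i, j)"
      unfolding D_def by (rule diag_mult_left[OF Dc(2) ij])
    thus "(D * Di) $$ (i, j) = 1\<^sub>m M $$ (i, j)" using ij w0 unfolding Di_def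
      by (simp add: power_int_minus)
  qed (use Dc in auto)
  have Pc: "Pm \<in> carrier_mat M M" by simp
  have eq: "C w = Di * Pm * D"
  proof (rule eq_matI)
    fix i j assume "i < dim_row (Di * Pm * D)" "j < dim_col (Di * Pm * D)"
    hence ij: "i < M" "j < M" using Dc by auto
    have DP: "Di * Pm \<in> carrier_mat M M" using Dc Pc by simp
    have "(Di * Pm * D) $$ (i, j) = (Di * Pm) $$ (i, j) * w powi h j"
      unfolding D_def by (rule diag_mult_right[OF DP ij])
    also have "(Di * Pm) $$ (i, j) = w powi (- h i) * Pm $$ (i, j)"
      unfolding Di_def by (rule diag_mult_left[OF Pc ij])
    finally have "(Di * Pm * D) $$ (i, j) = (w powi (- h i) * w powi h j) * complex_of_real (p i j)"
      using ij by (simp add: mult_ac)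
    also have "w powi (- h i) * w powi h j = w powi (h j - h i)"
      using w0 by (simp add: power_int_add[symmetric])
    finally show "C w $$ (i, j) = (Di * Pm * D) $$ (i, j)" using C_entry_tau[OF w wt ij] by simp
  qed (use Dc Gamma_carrier in auto)
  show ?thesis
    by (rule similar_matI[of _ _ Di D M]) (use Gamma_carrier Dc Pc DiD DDi eq in auto)
qed

lemma tau_ev: "cmod w = 1 \<Longrightarrow> w ^ tau M A = 1 \<Longrightarrow> eigenvalue (C w) 1 \<and> order 1 (char_poly (C w)) = 1"
  using char_poly_similar[OF tau_similar] nn.order_Pm Pm_ev1
    eigenvalue_root_char_poly[OF Gamma_carrier] eigenvalue_root_char_poly[of Pm M] by auto

end


context mg1
begin

lemma Asum_nonneg: "i < M \<Longrightarrow> j < M \<Longrightarrow> 0 \<le> Asum A i j"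
  unfolding Asum_def by (intro suminf_nonneg A_summable A_nonneg)

lemma no_potential_tight:
  assumes g: "\<And>k i j. i < M \<Longrightarrow> j < M \<Longrightarrow> a k i j > 0 \<Longrightarrow> g j - g i = int k - 1"
  shows False
proof -
  have row: "(\<Sum>k. real k * (\<Sum>j<M. a k i j)) = (\<Sum>j<M. (real_of_int (g j - g i) + 1) * Asum A i j)"
    if i: "i < M" for i
  proof -
    have "(\<lambda>k. real k * (\<Sum>j<M. a k i j)) = (\<lambda>k. \<Sum>j<M. (real_of_int (g j - g i) + 1) * a k i j)"
    proof (rule ext)
      fix k
      have kj: "real k * a k i j = (real_of_int (g j - g i) + 1) * a k i j" if j: "j < M" for j
      proof (cases "a k i j > 0")
        case True
        hence "real_of_int (g j - g i) + 1 = real k" using g[OF i j True] by simp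
        thus ?thesis by simp
      next
        case False hence "a k i j = 0" using A_nonneg[OF i j, of k] by linarith
        thus ?thesis by simp
      qed
      have "real k * (\<Sum>j<M. a k i j) = (\<Sum>j<M. real k * a k i j)" by (rule sum_distrib_left)
      also have "\<dots> = (\<Sum>j<M. (real_of_int (g j - g i) + 1) * a k i j)"
        by (rule sum.cong) (use kj in auto)
      finally show "real k * (\<Sum>j<M. a k i j) = (\<Sum>j<M. (real_of_int (g j - g i) + 1) * a k i j)" .
    qed
    hence "(\<Sum>k. real k * (\<Sum>j<M. a k i j)) = (\<Sum>k. \<Sum>j<M. (real_of_int (g j - g i) + 1) * a k i j)"
      by simp
    also have "\<dots> = (\<Sum>j<M. \<Sum>k. (real_of_int (g j - g i) + 1) * a k i j)"
      by (rule suminf_sum) (use i A_summable in \<open>auto intro: summable_mult\<close>)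
    also have "\<dots> = (\<Sum>j<M. (real_of_int (g j - g i) + 1) * Asum A i j)"
      unfolding Asum_def by (intro sum.cong refl suminf_mult) (use i A_summable in auto)
    finally show ?thesis .
  qed
  have "(\<Sum>i<M. pi i * (\<Sum>k. real k * (\<Sum>j<M. A k $$ (i, j))))
      = (\<Sum>i<M. pi i * (\<Sum>j<M. (real_of_int (g j - g i) + 1) * Asum A i j))"
    using row by simp
  also have "\<dots> = (\<Sum>i<M. \<Sum>j<M. real_of_int (g j) * (pi i * Asum A i j))
      - (\<Sum>i<M. real_of_int (g i) * pi i * (\<Sum>j<M. Asum A i j)) + (\<Sum>i<M. pi i * (\<Sum>j<M. Asum A i j))"
  proof -
    have per: "pi i * (\<Sum>j<M. (real_of_int (g j - g i) + 1) * Asum A i j)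
      = (\<Sum>j<M. real_of_int (g j) * (pi i * Asum A i j)) - real_of_int (g i) * pi i * (\<Sum>j<M. Asum A i j)
        + pi i * (\<Sum>j<M. Asum A i j)" for i
    proof -
      have "pi i * (\<Sum>j<M. (real_of_int (g j - g i) + 1) * Asum A i j)
          = (\<Sum>j<M. pi i * ((real_of_int (g j - g i) + 1) * Asum A i j))" by (rule sum_distrib_left)
      also have "\<dots> = (\<Sum>j<M. real_of_int (g j) * (pi i * Asum A i j) - real_of_int (g i) * pi i * Asum A i j
          + pi i * Asum A i j)"
        by (rule sum.cong[OF refl]) (simp add: algebra_simps)
      also have "\<dots> = (\<Sum>j<M. real_of_int (g j) * (pi i * Asum A i j)) - (\<Sum>j<M. real_of_int (g i) * pi i * Asum A i j)
          + (\<Sum>j<M. pi i * Asum A i j)"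
        by (simp only: sum.distrib sum_subtractf)
      also have "(\<Sum>j<M. real_of_int (g i) * pi i * Asum A i j) = real_of_int (g i) * pi i * (\<Sum>j<M. Asum A i j)"
        by (rule sum_distrib_left[symmetric])
      also have "(\<Sum>j<M. pi i * Asum A i j) = pi i * (\<Sum>j<M. Asum A i j)"
        by (rule sum_distrib_left[symmetric])
      finally show ?thesis .
    qed
    show ?thesis unfolding per by (simp only: sum.distrib sum_subtractf)
  qed
  also have "(\<Sum>i<M. \<Sum>j<M. real_of_int (g j) * (pi i * Asum A i j)) = (\<Sum>j<M. real_of_int (g j) * pi j)"
    by (subst sum.swap) (simp add: sum_distrib_left[symmetric] pi_stat)
  also have "(\<Sum>i<M. real_of_int (g i) * pi i * (\<Sum>j<M. Asum A i j)) = (\<Sum>i<M. real_of_int (g i) * pi i)"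
    using A_stoch by simp
  also have "(\<Sum>i<M. pi i * (\<Sum>j<M. Asum A i j)) = 1" using A_stoch pi_norm by simp
  finally show False using rho_lt1 by simp
qed

lemma no_potential:
  assumes g: "\<And>k i j. i < M \<Longrightarrow> j < M \<Longrightarrow> a k i j > 0 \<Longrightarrow> g j - g i \<le> int k - 1"
  shows False
proof (cases "\<exists>k i j. i < M \<and> j < M \<and> a k i j > 0 \<and> g j - g i < int k - 1")
  case False
  have "g j - g i = int k - 1" if ij: "i < M" "j < M" and ak: "a k i j > 0" for k i j
  proof -
    have "g j - g i \<le> int k - 1" using g[OF ij ak] .
    moreover have "\<not> g j - g i < int k - 1" using False ij ak by blast
    ultimately show ?thesis by linarith
  qed
  thus False by (rule no_potential_tight)
next
  case True
  then obtain k1 i1 j1 where e1: "i1 < M" "j1 < M" "a k1 i1 j1 > 0" "g j1 - g i1 < int k1 - 1" by blast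
  define y where "y = nn.perron"
  have ypos: "\<And>i. i < M \<Longrightarrow> y i > 0" and yfix: "\<And>i. i < M \<Longrightarrow> nn.Pf y i = y i"
    unfolding y_def using nn.perron by auto
  have th0: "\<theta> > 0" using theta_gt1 by simp
  have pinv: "\<theta> powr (- x) * \<theta> powr x = 1" for x
    using th0 by (simp add: powr_add[symmetric])
  have pm1: "\<theta> powr (-1) = 1 / \<theta>" using th0 by (simp add: powr_minus divide_inverse)
  define z where "z = (\<lambda>i. \<theta> powr (real_of_int (g i)) * y i)"
  have zpos: "\<And>i. i < M \<Longrightarrow> z i > 0" unfolding z_def using ypos th0 by simp
  have yz: "y j = \<theta> powr (- real_of_int (g j)) * z j" for j
  proof -
    have "\<theta> powr (- real_of_int (g j)) * z j = (\<theta> powr (- real_of_int (g j)) * \<theta> powr (real_of_int (g j))) * y j"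
      unfolding z_def by (simp only: mult.assoc)
    thus ?thesis unfolding pinv by simp
  qed
  define c where "c = (\<lambda>i j. real_of_int (g i) - 1 - real_of_int (g j))"
  define e where "e = (\<lambda>i j k. \<theta> powr (real k - 1 - real_of_int (g j - g i)))"
  have esplit: "e i j k = \<theta> powr (c i j) * \<theta> ^ k" for i j k
  proof -
    have eqx: "real k - 1 - real_of_int (g j - g i) = real k + c i j" unfolding c_def by simp
    have "e i j k = \<theta> powr (real k + c i j)" by (simp only: e_def eqx)
    also have "\<dots> = \<theta> powr (real k) * \<theta> powr (c i j)" by (rule powr_add)
    also have "\<theta> powr (real k) = \<theta> ^ k" using th0 by (rule powr_realpow)
    finally show ?thesis by simp
  qed
  have csplit: "\<theta> powr (c i j) = \<theta> powr (real_of_int (g i)) * (1 / \<theta>) * \<theta> powr (- real_of_int (g j))" for i j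
  proof -
    have "c i j = (real_of_int (g i) + (-1)) + (- real_of_int (g j))" unfolding c_def by simp
    hence "\<theta> powr (c i j) = \<theta> powr ((real_of_int (g i) + (-1)) + (- real_of_int (g j)))" by simp
    also have "\<dots> = \<theta> powr (real_of_int (g i)) * \<theta> powr (-1) * \<theta> powr (- real_of_int (g j))"
      by (simp only: powr_add)
    finally show ?thesis unfolding pm1 .
  qed
  have efun: "(\<lambda>k. e i j k * a k i j) = (\<lambda>k. \<theta> powr (c i j) * (\<theta> ^ k * a k i j))" for i j
    by (rule ext) (simp add: esplit mult.assoc)
  have es: "summable (\<lambda>k. e i j k * a k i j)" if ij: "i < M" "j < M" for i j
    unfolding efun using ser_summable[OF ij] by (rule summable_mult)
  have zrow: "z i = (\<Sum>j<M. (\<Sum>k. e i j k * a k i j) * z j)" if i: "i < M" for i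
  proof -
    have "z i = \<theta> powr (real_of_int (g i)) * (\<Sum>j<M. p i j * y j)"
      unfolding z_def using yfix[OF i] unfolding nn.Pf_def by simp
    also have "\<dots> = (\<Sum>j<M. (\<Sum>k. e i j k * a k i j) * z j)"
      unfolding sum_distrib_left
    proof (rule sum.cong[OF refl])
      fix j assume "j \<in> {..<M}" hence j: "j < M" by simp
      have "(\<Sum>k. e i j k * a k i j) = \<theta> powr (c i j) * (\<Sum>k. \<theta> ^ k * a k i j)"
        unfolding efun by (rule suminf_mult[OF ser_summable[OF i j]])
      moreover have "\<theta> powr (real_of_int (g i)) * (p i j * y j) =
          \<theta> powr (c i j) * (\<Sum>k. \<theta> ^ k * a k i j) * z j"
        unfolding csplit p_def yz by (simp add: mult_ac divide_inverse)
      ultimately show "\<theta> powr (real_of_int (g i)) * (p i j * y j) = (\<Sum>k. e i j k * a k i j) * z j"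
        by simp
    qed
    finally show ?thesis .
  qed
  have ele: "a k i j \<le> e i j k * a k i j" if ij: "i < M" "j < M" for i j k
  proof (cases "a k i j > 0")
    case True
    have "1 \<le> e i j k" unfolding e_def using g[OF ij True] theta_gt1 by (intro ge_one_powr_ge_zero) auto
    thus ?thesis using True by simp
  next
    case False hence "a k i j = 0" using A_nonneg[OF ij, of k] by linarith
    thus ?thesis by simp
  qed
  have le1: "Asum A i j \<le> (\<Sum>k. e i j k * a k i j)" if ij: "i < M" "j < M" for i j
    unfolding Asum_def by (rule suminf_le) (use ele[OF ij] A_summable[OF ij] es[OF ij] in auto)
  have le2: "Asum A i j * z j \<le> (\<Sum>k. e i j k * a k i j) * z j" if ij: "i < M" "j < M" for i j
    using le1[OF ij] zpos[OF ij(2)] by (intro mult_right_mono) auto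
  have sub: "(\<Sum>j<M. Asum A i j * z j) \<le> z i" if i: "i < M" for i
    unfolding zrow[OF i] by (rule sum_mono) (use le2 i in auto)
  have strict: "(\<Sum>j<M. Asum A i1 j * z j) < z i1"
    unfolding zrow[OF e1(1)]
  proof (rule sum_strict_mono_ex1)
    show "\<forall>j\<in>{..<M}. Asum A i1 j * z j \<le> (\<Sum>k. e i1 j k * a k i1 j) * z j"
      using le2 e1(1) by auto
    have "Asum A i1 j1 < (\<Sum>k. e i1 j1 k * a k i1 j1)"
    proof -
      have "0 < (\<Sum>k. e i1 j1 k * a k i1 j1 - a k i1 j1)"
      proof (subst suminf_pos_iff)
        show "summable (\<lambda>k. e i1 j1 k * a k i1 j1 - a k i1 j1)"
          by (intro summable_diff es A_summable e1)
        show "\<And>k. 0 \<le> e i1 j1 k * a k i1 j1 - a k i1 j1" using ele[OF e1(1,2)] by simp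
        have "1 < e i1 j1 k1" unfolding e_def using e1(4) theta_gt1 by (intro gr_one_powr) auto
        hence "0 < e i1 j1 k1 * a k1 i1 j1 - a k1 i1 j1" using e1(3) by (simp add: algebra_simps)
        thus "\<exists>k. 0 < e i1 j1 k * a k i1 j1 - a k i1 j1" by blast
      qed
      also have "\<dots> = (\<Sum>k. e i1 j1 k * a k i1 j1) - Asum A i1 j1"
        unfolding Asum_def using suminf_diff[OF es[OF e1(1,2)] A_summable[OF e1(1,2)]] by simp
      finally show ?thesis by simp
    qed
    thus "\<exists>j\<in>{..<M}. Asum A i1 j * z j < (\<Sum>k. e i1 j k * a k i1 j) * z j"
      using e1(2) zpos[OF e1(2)] by (intro bexI[of _ j1]) auto
  qed simp
  define mz where "mz = Min (z ` {..<M})"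
  obtain j0 where j0: "j0 < M" "z j0 = mz" unfolding mz_def using M_pos
    by (metis (no_types, lifting) Min_in empty_iff finite_imageI finite_lessThan image_iff
        image_is_empty lessThan_iff)
  have mzle: "\<And>j. j < M \<Longrightarrow> mz \<le> z j" unfolding mz_def by auto
  define u where "u = (\<lambda>j. z j - mz)"
  have u0: "\<And>j. j < M \<Longrightarrow> 0 \<le> u j" unfolding u_def using mzle by simp
  have usub: "(\<Sum>j<M. Asum A i j * u j) \<le> u i" if i: "i < M" for i
  proof -
    have "(\<Sum>j<M. Asum A i j * u j) = (\<Sum>j<M. Asum A i j * z j) - mz * (\<Sum>j<M. Asum A i j)"
      unfolding u_def by (simp add: algebra_simps sum_subtractf sum_distrib_left)
    also have "\<dots> = (\<Sum>j<M. Asum A i j * z j) - mz" using A_stoch[OF i] by simp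
    finally show ?thesis using sub[OF i] unfolding u_def by simp
  qed
  have "u i1 = 0"
    by (rule zero_prop_gen[OF A_irred _ u0 usub j0(1) _ e1(1)])
       (use Asum_nonneg j0 u_def in auto)
  hence "z i1 = mz" unfolding u_def by simp
  have uz: "\<And>j. j < M \<Longrightarrow> z j = mz"
  proof -
    fix j assume j: "j < M"
    have "u j = 0" by (rule zero_prop_gen[OF A_irred _ u0 usub j0(1) _ j]) (use Asum_nonneg j0 u_def in auto)
    thus "z j = mz" unfolding u_def by simp
  qed
  have "(\<Sum>j<M. Asum A i1 j * z j) = mz * (\<Sum>j<M. Asum A i1 j)"
    using uz by (simp add: sum_distrib_left mult.commute)
  also have "\<dots> = z i1" using A_stoch[OF e1(1)] uz[OF e1(1)] by simp
  finally show False using strict by simp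
qed

end


lemma cis_pow_1: "0 < n \<Longrightarrow> cis (2 * pi / real n) ^ t = 1 \<longleftrightarrow> n dvd t"
proof -
  assume n: "0 < n"
  have eq: "cis (2 * pi / real n) ^ t = cis (real t * (2 * pi / real n))" by (rule Complex.DeMoivre)
  show ?thesis
  proof
    assume "cis (2 * pi / real n) ^ t = 1"
    hence "cis (real t * (2 * pi / real n)) = 1" unfolding eq .
    hence "Re (cis (real t * (2 * pi / real n))) = Re 1" by (rule arg_cong)
    hence "cos (real t * (2 * pi / real n)) = 1" by simp
    then obtain m :: int where m: "real t * (2 * pi / real n) = real_of_int m * 2 * pi"
      using cos_one_2pi_int by blast
    hence "real t = real_of_int m * real n" using n by (simp add: field_simps)
    hence "real_of_int (int t) = real_of_int (m * int n)" by simp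
    hence "int t = m * int n" by (rule of_int_eq_iff[THEN iffD1])
    hence "int n dvd int t" by simp
    thus "n dvd t" by simp
  next
    assume "n dvd t"
    then obtain q where q: "t = n * q" by auto
    have "real t * (2 * pi / real n) = 2 * pi * real q" using n unfolding q by (simp add: field_simps)
    thus "cis (2 * pi / real n) ^ t = 1" unfolding eq by simp
  qed
qed


context mg1
begin

lemma tau_pos: "tau M A \<ge> 1"
proof (rule ccontr)
  assume "\<not> tau M A \<ge> 1"
  hence t0: "tau M A = 0" by simp
  have "Gcd Sset = int (tau M A)" by (rule tau_eq[symmetric])
  also have "\<dots> = 0" using t0 by simp
  finally have g0: "Gcd Sset = 0" .
  have eqh: "h j - h i = int k - 1" if ij: "i < M" "j < M" and ak: "a k i j > 0" for k i j
    using K1[OF ij ak] unfolding g0 by simp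
  show False by (rule no_potential[of h]) (simp add: eqh)
qed

lemma tau_le: "tau M A \<le> M"
proof (rule ccontr)
  assume "\<not> tau M A \<le> M"
  hence tM: "M < tau M A" by simp
  define G where "G = Gcd Sset"
  have G: "G = int (tau M A)" unfolding G_def tau_eq ..
  have Gpos: "G > 0" using tau_pos G by simp
  define R where "R = (\<lambda>j. h j mod G) ` {..<M}"
  have "card R \<le> M" unfolding R_def using card_image_le[of "{..<M}"] by simp
  hence "\<not> {0..<G} \<subseteq> R"
  proof -
    assume cR: "card R \<le> M"
    have "card {0..<G} = tau M A" using G by simp
    moreover have "finite R" unfolding R_def by simp
    ultimately show ?thesis
    proof -
      assume "card {0..<G} = tau M A" "finite R"
      show ?thesis
      proof
        assume "{0..<G} \<subseteq> R"
        hence "card {0..<G} \<le> card R" using \<open>finite R\<close> by (rule card_mono[rotated])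
        thus False using \<open>card {0..<G} = tau M A\<close> cR tM by linarith
      qed
    qed
  qed
  then obtain r where r: "r \<in> {0..<G}" "r \<notin> R" by blast
  define g where "g = (\<lambda>j. (h j - r - 1) mod G)"
  have gb: "0 \<le> g j" "g j \<le> G - 2" if j: "j < M" for j
  proof -
    show "0 \<le> g j" unfolding g_def using Gpos by simp
    have lt: "g j < G" unfolding g_def using Gpos by simp
    have "g j \<noteq> G - 1"
    proof
      assume eq: "g j = G - 1"
      have c1: "h j mod G = ((h j - r - 1) mod G + (r + 1)) mod G" by (simp add: mod_add_left_eq)
      have c2: "((h j - r - 1) mod G + (r + 1)) mod G = (G - 1 + (r + 1)) mod G" using eq unfolding g_def by (simp only:)
      have e2: "G - 1 + (r + 1) = r + G" by simp
      have c3: "(r + G) mod G = r" using r(1) by simp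
      have "h j mod G = r" using c1 c2 c3 unfolding e2 by simp
      moreover have "h j mod G \<in> R" unfolding R_def using j by simp
      ultimately have "r \<in> R" by simp
      thus False using r(2) by simp
    qed
    thus "g j \<le> G - 2" using lt by simp
  qed
  have pot: "g j - g i \<le> int k - 1" if ij: "i < M" "j < M" and ak: "a k i j > 0" for k i j
  proof -
    have d1: "G dvd (int k - 1 - (h j - h i))" using K1[OF ij ak] unfolding G_def .
    have d2: "G dvd ((h j - r - 1) - g j)" "G dvd ((h i - r - 1) - g i)" unfolding g_def
      by (simp_all add: minus_mod_eq_mult_div)
    have eqd: "int k - 1 - (g j - g i) = (int k - 1 - (h j - h i)) + ((h j - r - 1) - g j) - ((h i - r - 1) - g i)"
      by simp
    have "G dvd (int k - 1 - (g j - g i))" unfolding eqd by (intro dvd_diff dvd_add d1 d2)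
    then obtain q where q: "int k - 1 - (g j - g i) = G * q" by (auto elim: dvdE)
    show ?thesis
    proof (rule ccontr)
      assume "\<not> g j - g i \<le> int k - 1"
      hence "G * q < 0" using q by simp
      hence "q < 0" using Gpos by (simp add: mult_less_0_iff)
      hence "G * q \<le> G * (-1)" using Gpos by (intro mult_left_mono) auto
      thus False using q gb[OF ij(1)] gb[OF ij(2)] by linarith
    qed
  qed
  show False using no_potential[of g] pot by blast
qed

end


theorem proposition2p11:
  fixes M0 M :: nat
    and A B :: "nat \<Rightarrow> real mat" and C0 :: "real mat"
    and pi :: "nat \<Rightarrow> real" and \<theta> :: real
  assumes M0_pos: "M0 > 0" and M_pos: "M > 0"
    and A_dim: "\<And>k. A k \<in> carrier_mat M M"
    and B0_dim: "B 0 \<in> carrier_mat M0 M0"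
    and B_dim: "\<And>k. k \<ge> 1 \<Longrightarrow> B k \<in> carrier_mat M0 M"
    and C0_dim: "C0 \<in> carrier_mat M M0"
    and A_nonneg: "\<And>k i j. i < M \<Longrightarrow> j < M \<Longrightarrow> A k $$ (i, j) \<ge> 0"
    and B0_nonneg: "\<And>i j. i < M0 \<Longrightarrow> j < M0 \<Longrightarrow> B 0 $$ (i, j) \<ge> 0"
    and B_nonneg: "\<And>k i j. k \<ge> 1 \<Longrightarrow> i < M0 \<Longrightarrow> j < M \<Longrightarrow> B k $$ (i, j) \<ge> 0"
    and C0_nonneg: "\<And>i j. i < M \<Longrightarrow> j < M0 \<Longrightarrow> C0 $$ (i, j) \<ge> 0"
    and A_summable: "\<And>i j. i < M \<Longrightarrow> j < M \<Longrightarrow> summable (\<lambda>k. A k $$ (i, j))"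
    and A_stoch: "\<And>i. i < M \<Longrightarrow> (\<Sum>j<M. Asum A i j) = 1"
    and B_summable: "\<And>i. i < M0 \<Longrightarrow> summable (\<lambda>k. \<Sum>j<M. B (Suc k) $$ (i, j))"
    and B_stoch: "\<And>i. i < M0 \<Longrightarrow>
        (\<Sum>j<M0. B 0 $$ (i, j)) + (\<Sum>k. \<Sum>j<M. B (Suc k) $$ (i, j)) = 1"
    and T_stoch: "\<And>i. i < M \<Longrightarrow>
        (\<Sum>j<M0. C0 $$ (i, j)) + (\<Sum>k. \<Sum>j<M. A (Suc k) $$ (i, j)) = 1"
    and pi_stat: "\<And>j. j < M \<Longrightarrow> (\<Sum>i<M. pi i * Asum A i j) = pi j"
    and pi_norm: "(\<Sum>i<M. pi i) = 1"
    and T_irred: "irreducible_on (mg1_states M0 M) (mg1_T A B C0)"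
    and A_irred: "irreducible_on {..<M} (Asum A)"
    and rho_lt1: "(\<Sum>i<M. pi i * (\<Sum>k. real k * (\<Sum>j<M. A k $$ (i, j)))) < 1"
    and rA_gt1: "rA M A > 1"
    and theta_gt1: "1 < \<theta>" and theta_lt: "ereal \<theta> < rA M A"
    and theta_delta: "complex_of_real \<theta> = delta (Astar M A (complex_of_real \<theta>))"
  shows "(\<forall>w::complex. cmod w = 1 \<longrightarrow>
            (delta (GammaStar M A (complex_of_real \<theta> * w)) = 1 \<longleftrightarrow> w ^ tau M A = 1))
       \<and> tau M A = Max {n \<in> {1..M}. delta (GammaStar M A (complex_of_real \<theta> * omega n)) = 1}
       \<and> (\<forall>w::complex. cmod w = 1 \<longrightarrow>
            delta (GammaStar M A (complex_of_real \<theta> * w)) = 1 \<longrightarrow>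
            order 1 (char_poly (GammaStar M A (complex_of_real \<theta> * w))) = 1)"
proof -
  interpret mg1 M A \<theta> pi
    by (rule mg1.intro) (fact M_pos A_dim A_nonneg A_summable A_stoch pi_stat pi_norm A_irred rho_lt1
        theta_gt1 theta_lt theta_delta)+
  have P1: "\<forall>w::complex. cmod w = 1 \<longrightarrow>
            (delta (GammaStar M A (complex_of_real \<theta> * w)) = 1 \<longleftrightarrow> w ^ tau M A = 1)"
    using delta_C_iff C_to_tau tau_ev by blast
  have P3: "\<forall>w::complex. cmod w = 1 \<longrightarrow>
            delta (GammaStar M A (complex_of_real \<theta> * w)) = 1 \<longrightarrow>
            order 1 (char_poly (GammaStar M A (complex_of_real \<theta> * w))) = 1"
    using P1 tau_ev by blast
  have set_eq: "{n \<in> {1..M}. delta (GammaStar M A (complex_of_real \<theta> * omega n)) = 1}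
      = {n \<in> {1..M}. n dvd tau M A}"
  proof (rule Collect_cong)
    fix n
    show "(n \<in> {1..M} \<and> delta (GammaStar M A (complex_of_real \<theta> * omega n)) = 1) =
          (n \<in> {1..M} \<and> n dvd tau M A)"
    proof (cases "n \<in> {1..M}")
      case True
      have "cmod (omega n) = 1" unfolding omega_def by simp
      hence "delta (GammaStar M A (complex_of_real \<theta> * omega n)) = 1 \<longleftrightarrow> omega n ^ tau M A = 1"
        using P1 by blast
      also have "\<dots> \<longleftrightarrow> n dvd tau M A" unfolding omega_def using True by (intro cis_pow_1) auto
      finally show ?thesis using True by simp
    next
      case False thus ?thesis by blast
    qed
  qed
  have P2: "tau M A = Max {n \<in> {1..M}. delta (GammaStar M A (complex_of_real \<theta> * omega n)) = 1}"
    unfolding set_eq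
  proof (rule Max_eqI[symmetric])
    show "finite {n \<in> {1..M}. n dvd tau M A}" by simp
    show "tau M A \<in> {n \<in> {1..M}. n dvd tau M A}" using tau_pos tau_le by simp
    fix y assume "y \<in> {n \<in> {1..M}. n dvd tau M A}"
    thus "y \<le> tau M A" using tau_pos by (auto intro: dvd_imp_le)
  qed
  show ?thesis using P1 P2 P3 by blast
qed


end
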